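(* Fix a finite alphabet $\mathcal{X}$, integers $M_1\ge M_2\ge1$, reals $\alpha,\beta>0$, and reals $\lambda_1,\lambda_2,\lambda_3>0$ with $\lambda_2\le\min\{\lambda_1,\lambda_3\}$; let $\xi_n=\lceil\alpha n\rceil$, $\chi_n=\lceil\beta n\rceil$. For each integer $N\ge2$ let $\Phi_N=(\tau,\phi_\tau)$ be the sequential test defined as follows. For $n\in\mathbb{N}$ and $(h,t)\in\mathcal{M}$ define the events $\mathcal{A}^n=\{\forall (h,t)\in\mathcal{M}:\ \mathrm{S}_t^h(\mathbf{X}^{\xi_n},\mathbf{Y}^{\chi_n})>\lambda_1\}$, $\mathcal{B}_{1,h,t}^n=\{\mathrm{S}_t^h(\mathbf{X}^{\xi_n},\mathbf{Y}^{\chi_n})\le\lambda_2\}$, $\mathcal{B}_{2,h,t}^n=\{\min_{\bar t\in[T_h],\bar t\ne t}\mathrm{S}_{\bar t}^h(\mathbf{X}^{\xi_n},\mathbf{Y}^{\chi_n})>\lambda_3\}$, $\mathcal{B}_{h,t}^n=\mathcal{B}_{1,h,t}^n\cap\mathcal{B}_{2,h,t}^n$, $\mathcal{B}^n=\bigcup_{(K,l)\in\mathcal{M}}\big(\mathcal{B}_{K,l}^n\cap\bigcap_{(h,t)\in\mathcal{M},(h,t)\ne(K,l)}(\mathcal{B}_{h,t}^n)^{c}\big)$. Let $\tau=\inf\{n\ge N-1:\ \mathcal{A}^n\cup\mathcal{B}^n\text{ occurs}\}$, and at time $\tau$ decide $\mathrm{H}_l^K$ if $\mathcal{B}_{K,l}^\tau\cap\bigcap_{(h,t)\ne(K,l)}(\mathcal{B}_{h,t}^\tau)^c$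 occurs for $(K,l)\in\mathcal{M}$, and decide $\mathrm{H}_{\mathrm{r}}$ otherwise. Then: (i) For any $(P^{M_1},Q^{M_2})\in\mathcal{P}_0$, if $\lambda_1<\mathrm{G}_0(P^{M_1},Q^{M_2},\alpha,\beta)$ then $\mathbb{E}_{\mathrm{r}}[\tau]\le N$ for all sufficiently large $N$, and $$\liminf_{N\to\infty}\frac{-\log\eta(\Phi_N|P^{M_1},Q^{M_2})}{N}\ge E_{\mathrm{r}}(\lambda_1,P^{M_1},Q^{M_2}).$$ (ii) For any $(K,l)\in\mathcal{M}$ and any $(P^{M_1},Q^{M_2})\in\mathcal{P}_l^K$: if $\lambda_2>0$ and $\lambda_3<\Lambda_l^K(P^{M_1},Q^{M_2},\alpha,\beta)$ then $\mathbb{E}_l^K[\tau]\le N$ for all sufficiently large $N$; moreover $$\liminf_{N\to\infty}\frac{-\log\bar\beta(\Phi_N|P^{M_1},Q^{M_2})}{N}\ge\min\{G(\lambda_2,P^{M_1},Q^{M_2}),\lambda_3\},\qquad \liminf_{N\to\infty}\frac{-\log\zeta(\Phi_N|P^{M_1},Q^{M_2})}{N}\ge\lambda_1.$$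
   Context: Model: $\mathcal{P}(\mathcal{X})$ is the set of distributions on $\mathcal{X}$. For $i\in[M_1]$, $X_{i,1},X_{i,2},\dots$ i.i.d. $P_i$; for $j\in[M_2]$, $Y_{j,1},Y_{j,2},\dots$ i.i.d. $Q_j$; all independent; within each database distributions are distinct. At time $n$ one observes $X_i^{\xi_n}=(X_{i,1},\dots,X_{i,\xi_n})$, $Y_j^{\chi_n}=(Y_{j,1},\dots,Y_{j,\chi_n})$ for all $i,j$. For $K\in[M_2]$, a $K$-match is a set of $K$ pairs in $[M_1]\times[M_2]$ with no two sharing a first or second coordinate; there are $T_K=\binom{M_1}{K}\binom{M_2}{K}K!$, enumerated $\mathcal{M}_1^K,\dots,\mathcal{M}_{T_K}^K$. $\mathcal{M}:=\{(h,t):h\in[M_2],t\in[T_h]\}$. Hypotheses: $\mathrm{H}_l^K$ ($(K,l)\in\mathcal{M}$) means $(P^{M_1},Q^{M_2})\in\mathcal{P}_l^K:=\{(\tilde P^{M_1},\tilde Q^{M_2}):\tilde P_i=\tilde Q_j\text{ iff }(i,j)\in\mathcal{M}_l^K\}$, with probability $\mathbb{P}_l^K$, expectation $\mathbb{E}_l^K$; the null hypothesis $\mathrm{H}_{\mathrm{r}}$ means $(P^{M_1},Q^{M_2})\in\mathcal{P}_0:=\{\tilde P_i\ne\tilde Q_j\ \forall (i,j)\in[M_1]\times[M_2]\}$, with $\mathbb{P}_{\mathrm{r}},\mathbb{E}_{\mathrm{r}}$. Error probabilities: under $\mathrm{H}_l^K$, mismatch $\bar\beta(\Phi|P^{M_1},Q^{M_2})=\mathbb{P}_l^K\{\phi_\tau\notin\{\mathrm{H}_l^K,\mathrm{H}_{\mathrm{r}}\}\}$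 and false reject $\zeta(\Phi|P^{M_1},Q^{M_2})=\mathbb{P}_l^K\{\phi_\tau=\mathrm{H}_{\mathrm{r}}\}$; under $\mathrm{H}_{\mathrm{r}}$, false alarm $\eta(\Phi|P^{M_1},Q^{M_2})=\mathbb{P}_{\mathrm{r}}\{\phi_\tau\ne\mathrm{H}_{\mathrm{r}}\}$. Notation: $\hat T_{x^n}$ is the type (empirical distribution) of $x^n$; $D$ is KL divergence; $R_{\alpha,\beta}^{P,Q}=\frac{\alpha P+\beta Q}{\alpha+\beta}$; $\mathrm{GJS}(P,Q,\alpha,\beta)=\alpha D(P\|R_{\alpha,\beta}^{P,Q})+\beta D(Q\|R_{\alpha,\beta}^{P,Q})$; $\mathrm{G}_t^h(P^{M_1},Q^{M_2},\alpha,\beta)=\sum_{(i,j)\in\mathcal{M}_t^h}\mathrm{GJS}(P_i,Q_j,\alpha,\beta)$; $\mathrm{S}_t^h(\mathbf{x}^{\xi_n},\mathbf{y}^{\chi_n})=\mathrm{G}_t^h((\hat T_{x_i^{\xi_n}})_i,(\hat T_{y_j^{\chi_n}})_j,\alpha,\beta)$. $E(P^{M_1},Q^{M_2},\Omega^{M_1},\Psi^{M_2},\alpha,\beta)=\sum_{i}\alpha D(\Omega_i\|P_i)+\sum_j\beta D(\Psi_j\|Q_j)$. $\mathrm{G}_0(P^{M_1},Q^{M_2},\alpha,\beta)=\min_{(i,j)\in[M_1]\times[M_2]}\mathrm{GJS}(P_i,Q_j,\alpha,\beta)$. $E_{\mathrm{r}}(\lambda,P^{M_1},Q^{M_2})=\min_{(h,t)\in\mathcal{M}}\min_{(\Omega^{M_1},\Psi^{M_2})\in\mathcal{P}(\mathcal{X})^{M_1+M_2}:\mathrm{G}_t^h(\Omega^{M_1},\Psi^{M_2},\alpha,\beta)\le\lambda}E(P^{M_1},Q^{M_2},\Omega^{M_1},\Psi^{M_2},\alpha,\beta)$.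 For $(P^{M_1},Q^{M_2})\in\mathcal{P}_l^K$: $\Lambda_l^K(P^{M_1},Q^{M_2},\alpha,\beta)=\min_{t\in[T_K],t\ne l}\sum_{(i,j)\in\mathcal{M}_t^K\setminus\mathcal{M}_l^K}\mathrm{GJS}(P_i,Q_j,\alpha,\beta)$ and $G(\lambda,P^{M_1},Q^{M_2})=\min_{(h,t)\in\mathcal{M}:h>K}\min_{(\Omega^{M_1},\Psi^{M_2}):\mathrm{G}_t^h(\Omega^{M_1},\Psi^{M_2},\alpha,\beta)\le\lambda}E(P^{M_1},Q^{M_2},\Omega^{M_1},\Psi^{M_2},\alpha,\beta)$ (a minimum over an empty set is $+\infty$). *)

theory Defs
  imports "HOL-Probability.Probability"
begin

definition probvec :: "('a::finite \<Rightarrow> real) set" where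
  "probvec = {p. (\<forall>a. 0 \<le> p a) \<and> sum p UNIV = 1}"

definition klr :: "('a::finite \<Rightarrow> real) \<Rightarrow> ('a \<Rightarrow> real) \<Rightarrow> real" where
  "klr p q = (\<Sum>a\<in>UNIV. if p a = 0 then 0 else p a * ln (p a / q a))"

definition kl :: "('a::finite \<Rightarrow> real) \<Rightarrow> ('a \<Rightarrow> real) \<Rightarrow> ereal" where
  "kl p q = (if (\<forall>a. q a = 0 \<longrightarrow> p a = 0) then ereal (klr p q) else \<infinity>)"

definition mixR :: "real \<Rightarrow> real \<Rightarrow> ('a \<Rightarrow> real) \<Rightarrow> ('a \<Rightarrow> real) \<Rightarrow> 'a \<Rightarrow> real" where
  "mixR \<alpha> \<beta> p q = (\<lambda>a. (\<alpha> * p a + \<beta> * q a) / (\<alpha> + \<beta>))"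

definition GJS :: "('a::finite \<Rightarrow> real) \<Rightarrow> ('a \<Rightarrow> real) \<Rightarrow> real \<Rightarrow> real \<Rightarrow> real" where
  "GJS p q \<alpha> \<beta> = \<alpha> * klr p (mixR \<alpha> \<beta> p q) + \<beta> * klr q (mixR \<alpha> \<beta> p q)"

text \<open>A match: a set of pairs in [M1] x [M2] (0-based) no two sharing a coordinate. The index set \<M> is represented by the
  matches themselves (h = card of the match, t = the match).\<close>
definition is_match :: "nat \<Rightarrow> nat \<Rightarrow> (nat \<times> nat) set \<Rightarrow> bool" where
  "is_match M1 M2 m \<longleftrightarrow> m \<subseteq> {..<M1} \<times> {..<M2} \<and>
     (\<forall>(i,j)\<in>m. \<forall>(i',j')\<in>m. (i = i' \<longleftrightarrow> j = j'))"

definition matches :: "nat \<Rightarrow> nat \<Rightarrow> nat \<Rightarrow> (nat \<times> nat) set set" where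
  "matches M1 M2 K = {m. is_match M1 M2 m \<and> card m = K}"

definition Midx :: "nat \<Rightarrow> nat \<Rightarrow> (nat \<times> nat) set set" where
  "Midx M1 M2 = {m. is_match M1 M2 m \<and> 1 \<le> card m \<and> card m \<le> M2}"

definition Gm :: "(nat \<times> nat) set \<Rightarrow> real \<Rightarrow> real \<Rightarrow> (nat \<Rightarrow> 'a::finite \<Rightarrow> real)
     \<Rightarrow> (nat \<Rightarrow> 'a \<Rightarrow> real) \<Rightarrow> real" where
  "Gm m \<alpha> \<beta> P Q = (\<Sum>(i,j)\<in>m. GJS (P i) (Q j) \<alpha> \<beta>)"

text \<open>Sample point: \<omega> (Inl i, k) = X_{i,k+1}, \<omega> (Inr j, k) = Y_{j,k+1}.\<close>
type_synonym 'a sample = "(nat + nat) \<times> nat \<Rightarrow> 'a"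

definition obs_space :: "(nat \<Rightarrow> 'a pmf) \<Rightarrow> (nat \<Rightarrow> 'a pmf) \<Rightarrow> 'a sample measure" where
  "obs_space P Q = PiM UNIV (\<lambda>(s,k). measure_pmf (case s of Inl i \<Rightarrow> P i | Inr j \<Rightarrow> Q j))"

definition emp :: "(nat \<Rightarrow> 'a::finite) \<Rightarrow> nat \<Rightarrow> 'a \<Rightarrow> real" where
  "emp x n = (\<lambda>a. real (card {k. k < n \<and> x k = a}) / real n)"

definition ssize :: "real \<Rightarrow> nat \<Rightarrow> nat" where
  "ssize \<alpha> n = nat \<lceil>\<alpha> * real n\<rceil>"

definition Sstat :: "real \<Rightarrow> real \<Rightarrow> (nat \<times> nat) set \<Rightarrow> nat \<Rightarrow> 'a::finite sample \<Rightarrow> real" where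
  "Sstat \<alpha> \<beta> m n \<omega> = Gm m \<alpha> \<beta> (\<lambda>i. emp (\<lambda>k. \<omega> (Inl i, k)) (ssize \<alpha> n))
                                 (\<lambda>j. emp (\<lambda>k. \<omega> (Inr j, k)) (ssize \<beta> n))"

definition evA :: "nat \<Rightarrow> nat \<Rightarrow> real \<Rightarrow> real \<Rightarrow> real \<Rightarrow> nat \<Rightarrow> 'a::finite sample \<Rightarrow> bool" where
  "evA M1 M2 \<alpha> \<beta> l1 n \<omega> = (\<forall>m\<in>Midx M1 M2. l1 < Sstat \<alpha> \<beta> m n \<omega>)"

definition evB :: "nat \<Rightarrow> nat \<Rightarrow> real \<Rightarrow> real \<Rightarrow> real \<Rightarrow> real \<Rightarrow> (nat \<times> nat) set \<Rightarrow> nat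
     \<Rightarrow> 'a::finite sample \<Rightarrow> bool" where
  "evB M1 M2 \<alpha> \<beta> l2 l3 m n \<omega> =
     (Sstat \<alpha> \<beta> m n \<omega> \<le> l2 \<and>
      (\<forall>m'\<in>matches M1 M2 (card m). m' \<noteq> m \<longrightarrow> l3 < Sstat \<alpha> \<beta> m' n \<omega>))"

text \<open>The event B_{K,l} \<inter> \<Inter>_{(h,t) \<noteq> (K,l)} (B_{h,t})^c.\<close>
definition evD :: "nat \<Rightarrow> nat \<Rightarrow> real \<Rightarrow> real \<Rightarrow> real \<Rightarrow> real \<Rightarrow> (nat \<times> nat) set \<Rightarrow> nat
     \<Rightarrow> 'a::finite sample \<Rightarrow> bool" where
  "evD M1 M2 \<alpha> \<beta> l2 l3 m n \<omega> =
     (evB M1 M2 \<alpha> \<beta> l2 l3 m n \<omega> \<and>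
      (\<forall>m'\<in>Midx M1 M2. m' \<noteq> m \<longrightarrow> \<not> evB M1 M2 \<alpha> \<beta> l2 l3 m' n \<omega>))"

definition stops :: "nat \<Rightarrow> nat \<Rightarrow> real \<Rightarrow> real \<Rightarrow> real \<Rightarrow> real \<Rightarrow> real \<Rightarrow> nat
     \<Rightarrow> 'a::finite sample \<Rightarrow> bool" where
  "stops M1 M2 \<alpha> \<beta> l1 l2 l3 n \<omega> =
     (evA M1 M2 \<alpha> \<beta> l1 n \<omega> \<or> (\<exists>m\<in>Midx M1 M2. evD M1 M2 \<alpha> \<beta> l2 l3 m n \<omega>))"

definition tau :: "nat \<Rightarrow> nat \<Rightarrow> real \<Rightarrow> real \<Rightarrow> real \<Rightarrow> real \<Rightarrow> real \<Rightarrow> nat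
     \<Rightarrow> 'a::finite sample \<Rightarrow> enat" where
  "tau M1 M2 \<alpha> \<beta> l1 l2 l3 N \<omega> =
     (if \<exists>n. N - 1 \<le> n \<and> stops M1 M2 \<alpha> \<beta> l1 l2 l3 n \<omega>
      then enat (LEAST n. N - 1 \<le> n \<and> stops M1 M2 \<alpha> \<beta> l1 l2 l3 n \<omega>)
      else \<infinity>)"

text \<open>Decision of \<Phi>_N: Some m = decide H_m, None = decide H_r (also used, irrelevantly,
  when tau is infinite; all error events below require tau finite).\<close>
definition decision :: "nat \<Rightarrow> nat \<Rightarrow> real \<Rightarrow> real \<Rightarrow> real \<Rightarrow> real \<Rightarrow> real \<Rightarrow> nat
     \<Rightarrow> 'a::finite sample \<Rightarrow> (nat \<times> nat) set option" where
  "decision M1 M2 \<alpha> \<beta> l1 l2 l3 N \<omega> =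
     (case tau M1 M2 \<alpha> \<beta> l1 l2 l3 N \<omega> of
        enat n \<Rightarrow> (if \<exists>m\<in>Midx M1 M2. evD M1 M2 \<alpha> \<beta> l2 l3 m n \<omega>
                   then Some (THE m. m \<in> Midx M1 M2 \<and> evD M1 M2 \<alpha> \<beta> l2 l3 m n \<omega>)
                   else None)
      | \<infinity> \<Rightarrow> None)"

definition distinct_db :: "nat \<Rightarrow> nat \<Rightarrow> (nat \<Rightarrow> 'a pmf) \<Rightarrow> (nat \<Rightarrow> 'a pmf) \<Rightarrow> bool" where
  "distinct_db M1 M2 P Q \<longleftrightarrow> inj_on P {..<M1} \<and> inj_on Q {..<M2}"

definition inP0 :: "nat \<Rightarrow> nat \<Rightarrow> (nat \<Rightarrow> 'a pmf) \<Rightarrow> (nat \<Rightarrow> 'a pmf) \<Rightarrow> bool" where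
  "inP0 M1 M2 P Q \<longleftrightarrow> distinct_db M1 M2 P Q \<and> (\<forall>i<M1. \<forall>j<M2. P i \<noteq> Q j)"

definition inPm :: "nat \<Rightarrow> nat \<Rightarrow> (nat \<times> nat) set \<Rightarrow> (nat \<Rightarrow> 'a pmf) \<Rightarrow> (nat \<Rightarrow> 'a pmf) \<Rightarrow> bool" where
  "inPm M1 M2 m P Q \<longleftrightarrow> distinct_db M1 M2 P Q \<and> (\<forall>i<M1. \<forall>j<M2. (P i = Q j \<longleftrightarrow> (i,j) \<in> m))"

definition Eexp :: "nat \<Rightarrow> nat \<Rightarrow> real \<Rightarrow> real \<Rightarrow> (nat \<Rightarrow> 'a::finite pmf) \<Rightarrow> (nat \<Rightarrow> 'a pmf)
     \<Rightarrow> (nat \<Rightarrow> 'a \<Rightarrow> real) \<Rightarrow> (nat \<Rightarrow> 'a \<Rightarrow> real) \<Rightarrow> ereal" where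
  "Eexp M1 M2 \<alpha> \<beta> P Q \<Omega> \<Psi> =
     (\<Sum>i<M1. ereal \<alpha> * kl (\<Omega> i) (pmf (P i))) + (\<Sum>j<M2. ereal \<beta> * kl (\<Psi> j) (pmf (Q j)))"

definition feasible :: "nat \<Rightarrow> nat \<Rightarrow> real \<Rightarrow> real \<Rightarrow> real \<Rightarrow> (nat \<times> nat) set
     \<Rightarrow> (nat \<Rightarrow> 'a::finite \<Rightarrow> real) \<Rightarrow> (nat \<Rightarrow> 'a \<Rightarrow> real) \<Rightarrow> bool" where
  "feasible M1 M2 \<alpha> \<beta> lam m \<Omega> \<Psi> \<longleftrightarrow>
     (\<forall>i<M1. \<Omega> i \<in> probvec) \<and> (\<forall>j<M2. \<Psi> j \<in> probvec) \<and> Gm m \<alpha> \<beta> \<Omega> \<Psi> \<le> lam"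

text \<open>E_r(\<lambda>, P, Q) (minimum over an empty set = +\<infinity>).\<close>
definition Er :: "nat \<Rightarrow> nat \<Rightarrow> real \<Rightarrow> real \<Rightarrow> real \<Rightarrow> (nat \<Rightarrow> 'a::finite pmf) \<Rightarrow> (nat \<Rightarrow> 'a pmf) \<Rightarrow> ereal" where
  "Er M1 M2 \<alpha> \<beta> lam P Q = Inf {Eexp M1 M2 \<alpha> \<beta> P Q \<Omega> \<Psi> | \<Omega> \<Psi> m.
       m \<in> Midx M1 M2 \<and> feasible M1 M2 \<alpha> \<beta> lam m \<Omega> \<Psi>}"

definition Gexp :: "nat \<Rightarrow> nat \<Rightarrow> real \<Rightarrow> real \<Rightarrow> nat \<Rightarrow> real \<Rightarrow> (nat \<Rightarrow> 'a::finite pmf) \<Rightarrow> (nat \<Rightarrow> 'a pmf) \<Rightarrow> ereal" where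
  "Gexp M1 M2 \<alpha> \<beta> K lam P Q = Inf {Eexp M1 M2 \<alpha> \<beta> P Q \<Omega> \<Psi> | \<Omega> \<Psi> m.
       m \<in> Midx M1 M2 \<and> K < card m \<and> feasible M1 M2 \<alpha> \<beta> lam m \<Omega> \<Psi>}"

definition Lam :: "nat \<Rightarrow> nat \<Rightarrow> real \<Rightarrow> real \<Rightarrow> (nat \<times> nat) set \<Rightarrow> (nat \<Rightarrow> 'a::finite pmf) \<Rightarrow> (nat \<Rightarrow> 'a pmf) \<Rightarrow> ereal" where
  "Lam M1 M2 \<alpha> \<beta> m P Q = Inf {ereal (\<Sum>(i,j)\<in>m' - m. GJS (pmf (P i)) (pmf (Q j)) \<alpha> \<beta>) | m'.
       m' \<in> matches M1 M2 (card m) \<and> m' \<noteq> m}"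

definition G0 :: "nat \<Rightarrow> nat \<Rightarrow> real \<Rightarrow> real \<Rightarrow> (nat \<Rightarrow> 'a::finite pmf) \<Rightarrow> (nat \<Rightarrow> 'a pmf) \<Rightarrow> real" where
  "G0 M1 M2 \<alpha> \<beta> P Q = Min {GJS (pmf (P i)) (pmf (Q j)) \<alpha> \<beta> | i j. i < M1 \<and> j < M2}"

definition neglog :: "real \<Rightarrow> ereal" where
  "neglog p = (if p = 0 then \<infinity> else ereal (- ln p))"

end

theory Submission
  imports Defs
begin

definition Dk :: "(nat \<Rightarrow> 'a pmf) \<Rightarrow> (nat \<Rightarrow> 'a pmf) \<Rightarrow> (nat + nat) \<times> nat \<Rightarrow> 'a pmf" where
  "Dk P Q = (\<lambda>(s,k). case s of Inl i \<Rightarrow> P i | Inr j \<Rightarrow> Q j)"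

lemma obs_space_alt: "obs_space P Q = PiM UNIV (\<lambda>sk. measure_pmf (Dk P Q sk))"
  unfolding obs_space_def Dk_def by (rule arg_cong[where f="PiM UNIV"]) (auto split: prod.split)

lemma space_obs[simp]: "space (obs_space P Q) = UNIV"
  unfolding obs_space_alt space_PiM by auto

lemma prob_space_obs: "prob_space (obs_space P Q)"
  unfolding obs_space_alt by (rule prob_space_PiM) (simp add: prob_space_measure_pmf)

definition cyl :: "((nat + nat) \<times> nat) set \<Rightarrow> 'a sample \<Rightarrow> 'a sample set" where
  "cyl J x = {\<omega>. \<forall>k\<in>J. \<omega> k = x k}"

lemma cyl_emb: "cyl J x = prod_emb UNIV (\<lambda>sk. measure_pmf (Dk P Q sk)) J (PiE J (\<lambda>k. {x k}))"
  unfolding cyl_def prod_emb_def by (auto simp: space_PiM PiE_iff restrict_def)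

lemma cyl_sets: "finite J \<Longrightarrow> cyl J x \<in> sets (obs_space P Q)"
  unfolding obs_space_alt by (subst cyl_emb[of _ _ P Q]) (auto intro!: sets_PiM_I_finite)

lemma cyl_emeasure: "finite J \<Longrightarrow> emeasure (obs_space P Q) (cyl J x) = (\<Prod>k\<in>J. ennreal (pmf (Dk P Q k) (x k)))"
  unfolding obs_space_alt
  by (subst cyl_emb[of _ _ P Q], subst emeasure_PiM_emb) (auto simp: prob_space_measure_pmf emeasure_pmf_single)

lemma emp_cong: "(\<And>k. k < s \<Longrightarrow> f k = g k) \<Longrightarrow> emp f s = emp g s"
  unfolding emp_def by (rule ext) (metis (mono_tags, lifting) Collect_cong)

lemma emp_nonneg: "0 \<le> emp f s a"
  unfolding emp_def by simp

lemma card_fibers_sum: "(\<Sum>a\<in>(UNIV::'a::finite set). card {k. k < s \<and> f k = a}) = s"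
proof -
  have "(\<Sum>a\<in>(UNIV::'a set). card {k. k < s \<and> f k = a}) = (\<Sum>a\<in>UNIV. \<Sum>k\<in>{k. k \<in> {..<s} \<and> f k = a}. (1::nat))"
    by simp
  also have "\<dots> = (\<Sum>k\<in>{..<s}. 1)"
    by (rule sum.group) auto
  finally show ?thesis by simp
qed

lemma emp_probvec: "s \<ge> 1 \<Longrightarrow> emp (f :: nat \<Rightarrow> 'a::finite) s \<in> probvec"
proof -
  assume s: "s \<ge> 1"
  have "(\<Sum>a\<in>UNIV. emp f s a) = (\<Sum>a\<in>(UNIV::'a set). real (card {k. k < s \<and> f k = a})) / real s"
    unfolding emp_def by (simp add: sum_divide_distrib)
  also have "(\<Sum>a\<in>(UNIV::'a set). real (card {k. k < s \<and> f k = a})) = real s"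
    using card_fibers_sum[of s f] by (metis of_nat_sum)
  finally show ?thesis using s unfolding probvec_def by (auto simp: emp_nonneg)
qed

lemma emp_sum1: "s \<ge> 1 \<Longrightarrow> sum (emp (f :: nat \<Rightarrow> 'a::finite) s) UNIV = 1"
  using emp_probvec[of s f] unfolding probvec_def by simp

lemma prod_row: "(\<Prod>k<(s::nat). g (y k)) = (\<Prod>a\<in>(UNIV::'a::finite set). g a ^ card {k. k < s \<and> y k = a})"
proof -
  have "(\<Prod>k<s. g (y k)) = (\<Prod>a\<in>(UNIV::'a set). \<Prod>k\<in>{k. k \<in> {..<s} \<and> y k = a}. g (y k))"
    by (rule prod.group[symmetric]) auto
  also have "\<dots> = (\<Prod>a\<in>(UNIV::'a set). \<Prod>k\<in>{k. k \<in> {..<s} \<and> y k = a}. g a)"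
    by (rule prod.cong) auto
  finally show ?thesis by simp
qed

lemma gibbs:
  fixes p q :: "'a::finite \<Rightarrow> real"
  assumes p: "p \<in> probvec" and q0: "\<And>a. 0 \<le> q a" and q1: "sum q UNIV \<le> 1"
    and ac: "\<And>a. q a = 0 \<Longrightarrow> p a = 0"
  shows "0 \<le> klr p q"
proof -
  have tm: "(if p a = 0 then 0 else p a * ln (p a / q a)) \<ge> p a - q a" for a
  proof (cases "p a = 0")
    case True then show ?thesis using q0[of a] by simp
  next
    case False
    have p0: "0 \<le> p a" using p unfolding probvec_def by simp
    have pa: "p a > 0" using False p0 by linarith
    have "q a \<noteq> 0" using ac[of a] False by blast
    then have qa: "q a > 0" using q0[of a] by linarith
    have l1: "ln (q a / p a) \<le> q a / p a - 1" by (rule ln_le_minus_one) (use pa qa in simp)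
    have l2: "ln (p a / q a) = - ln (q a / p a)" using pa qa by (simp add: ln_div)
    have "1 - q a / p a \<le> ln (p a / q a)" using l1 l2 by linarith
    then have "p a * (1 - q a / p a) \<le> p a * ln (p a / q a)"
      by (rule mult_left_mono) (use pa in simp)
    moreover have "p a * (1 - q a / p a) = p a - q a" using pa by (simp add: field_simps)
    ultimately have "p a - q a \<le> p a * ln (p a / q a)" by simp
    then show ?thesis using False by simp
  qed
  have "klr p q \<ge> (\<Sum>a\<in>UNIV. p a - q a)"
    unfolding klr_def by (rule sum_mono) (rule tm)
  also have "(\<Sum>a\<in>UNIV. p a - q a) = 1 - sum q UNIV"
    using p unfolding probvec_def by (simp add: sum_subtractf)
  finally show ?thesis using q1 by linarith
qed

lemma pmf_probvec: "pmf (p :: 'a::finite pmf) \<in> probvec"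
  unfolding probvec_def by (auto simp: sum_pmf_eq_1)

lemma row_ac:
  fixes y :: "nat \<Rightarrow> 'a::finite" and p :: "'a \<Rightarrow> real"
  assumes s: "s \<ge> 1" and p0: "\<And>a. 0 \<le> p a" and ac: "\<And>a. p a = 0 \<Longrightarrow> emp y s a = 0"
  shows "(\<Prod>k<s. p (y k)) = (\<Prod>k<s. emp y s (y k)) * exp (- (real s * klr (emp y s) p))"
proof -
  let ?c = "\<lambda>a. card {k. k < s \<and> y k = a}"
  let ?T = "emp y s"
  have T: "?T a = real (?c a) / real s" for a unfolding emp_def by simp
  have "exp (- (real s * klr ?T p)) = exp (\<Sum>a\<in>UNIV. - (real s * (if ?T a = 0 then 0 else ?T a * ln (?T a / p a))))"
    unfolding klr_def by (simp add: sum_distrib_left sum_negf)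
  also have "\<dots> = (\<Prod>a\<in>UNIV. exp (- (real s * (if ?T a = 0 then 0 else ?T a * ln (?T a / p a)))))"
    by (simp add: exp_sum)
  finally have e: "exp (- (real s * klr ?T p)) = \<dots>" .
  have per: "p a ^ ?c a = ?T a ^ ?c a * exp (- (real s * (if ?T a = 0 then 0 else ?T a * ln (?T a / p a))))" for a
  proof (cases "?c a = 0")
    case True
    then have "?T a = 0" using T[of a] by simp
    then show ?thesis by (simp only: True \<open>?T a = 0\<close> power_0) simp
  next
    case False
    then have c0: "real (?c a) > 0" by (metis of_nat_0_less_iff neq0_conv)
    then have Ta: "?T a > 0" using T[of a] s by simp
    then have pa: "p a > 0" using ac[of a] p0[of a] by fastforce
    have st: "real s * ?T a = real (?c a)" using T[of a] s by simp
    have l: "ln (p a / ?T a) = - ln (?T a / p a)" using Ta pa by (simp add: ln_div)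
    have "- (real s * (?T a * ln (?T a / p a))) = real (?c a) * ln (p a / ?T a)"
      unfolding l st[symmetric] by (simp only: mult.assoc mult_minus_right)
    then have "exp (- (real s * (?T a * ln (?T a / p a)))) = exp (real (?c a) * ln (p a / ?T a))"
      by simp
    also have "\<dots> = (p a / ?T a) ^ ?c a" using Ta pa by (simp add: exp_of_nat_mult)
    finally show ?thesis using Ta by (simp add: power_divide)
  qed
  show ?thesis
    unfolding prod_row[of p] prod_row[of ?T] e prod.distrib[symmetric] using per by (rule prod.cong[OF refl])
qed

lemma row_nonac:
  fixes y :: "nat \<Rightarrow> 'a::finite" and p :: "'a \<Rightarrow> real"
  assumes "p a = 0" "emp y s a \<noteq> 0"
  shows "(\<Prod>k<s. p (y k)) = 0"
proof -
  from assms(2) have "{k. k < s \<and> y k = a} \<noteq> {}" unfolding emp_def by (metis card.empty of_nat_0 div_0)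
  then obtain k where "k < s" "y k = a" by auto
  then show ?thesis using assms(1) by (auto intro: prod_zero)
qed

definition Jset :: "nat \<Rightarrow> nat \<Rightarrow> nat \<Rightarrow> nat \<Rightarrow> ((nat + nat) \<times> nat) set" where
  "Jset M1 M2 s t = (\<lambda>(i,k). (Inl i, k)) ` ({..<M1} \<times> {..<s}) \<union> (\<lambda>(j,k). (Inr j, k)) ` ({..<M2} \<times> {..<t})"

definition tX :: "nat \<Rightarrow> 'a::finite sample \<Rightarrow> nat \<Rightarrow> 'a \<Rightarrow> real" where
  "tX s \<omega> = (\<lambda>i. emp (\<lambda>k. \<omega> (Inl i, k)) s)"

definition tY :: "nat \<Rightarrow> 'a::finite sample \<Rightarrow> nat \<Rightarrow> 'a \<Rightarrow> real" where
  "tY t \<omega> = (\<lambda>j. emp (\<lambda>k. \<omega> (Inr j, k)) t)"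

definition Tf :: "(nat \<Rightarrow> 'a \<Rightarrow> real) \<Rightarrow> (nat \<Rightarrow> 'a \<Rightarrow> real) \<Rightarrow> (nat + nat) \<times> nat \<Rightarrow> 'a \<Rightarrow> real" where
  "Tf X Y = (\<lambda>(s,k). case s of Inl i \<Rightarrow> X i | Inr j \<Rightarrow> Y j)"

lemma finite_Jset[simp]: "finite (Jset M1 M2 s t)"
  unfolding Jset_def by auto

lemma inl_in_Jset: "(Inl i, k) \<in> Jset M1 M2 s t \<longleftrightarrow> i < M1 \<and> k < s"
  unfolding Jset_def by auto

lemma inr_in_Jset: "(Inr j, k) \<in> Jset M1 M2 s t \<longleftrightarrow> j < M2 \<and> k < t"
  unfolding Jset_def by auto

lemma prodJ:
  fixes g :: "(nat + nat) \<times> nat \<Rightarrow> 'b::comm_monoid_mult"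
  shows "(\<Prod>k\<in>Jset M1 M2 s t. g k) = (\<Prod>i<M1. \<Prod>k<s. g (Inl i, k)) * (\<Prod>j<M2. \<Prod>k<t. g (Inr j, k))"
proof -
  have d: "(\<lambda>(i,k). (Inl i, k)) ` ({..<M1} \<times> {..<s}) \<inter> (\<lambda>(j,k). (Inr j, k)) ` ({..<M2} \<times> {..<t}) = {}"
    by auto
  have i1: "inj_on (\<lambda>(i,k). (Inl i :: nat + nat, k :: nat)) A" for A by (auto simp: inj_on_def)
  have i2: "inj_on (\<lambda>(j,k). (Inr j :: nat + nat, k :: nat)) A" for A by (auto simp: inj_on_def)
  have "(\<Prod>k\<in>Jset M1 M2 s t. g k) = (\<Prod>k\<in>(\<lambda>(i,k). (Inl i, k)) ` ({..<M1} \<times> {..<s}). g k) * (\<Prod>k\<in>(\<lambda>(j,k). (Inr j, k)) ` ({..<M2} \<times> {..<t}). g k)"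
    unfolding Jset_def by (rule prod.union_disjoint) (use d in auto)
  also have "(\<Prod>k\<in>(\<lambda>(i,k). (Inl i, k)) ` ({..<M1} \<times> {..<s}). g k) = (\<Prod>z\<in>{..<M1} \<times> {..<s}. g (case z of (i,k) \<Rightarrow> (Inl i, k)))"
    by (subst prod.reindex[OF i1]) (simp add: comp_def)
  also have "\<dots> = (\<Prod>i<M1. \<Prod>k<s. g (Inl i, k))"
    by (simp add: prod.cartesian_product case_prod_beta)
  also have "(\<Prod>k\<in>(\<lambda>(j,k). (Inr j, k)) ` ({..<M2} \<times> {..<t}). g k) = (\<Prod>z\<in>{..<M2} \<times> {..<t}. g (case z of (j,k) \<Rightarrow> (Inr j, k)))"
    by (subst prod.reindex[OF i2]) (simp add: comp_def)
  also have "\<dots> = (\<Prod>j<M2. \<Prod>k<t. g (Inr j, k))"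
    by (simp add: prod.cartesian_product case_prod_beta)
  finally show ?thesis .
qed

lemma ssize_ge: "\<alpha> * real n \<le> real (ssize \<alpha> n)"
  unfolding ssize_def by (rule real_nat_ceiling_ge)

lemma ssize_pos: "\<alpha> > 0 \<Longrightarrow> n \<ge> 1 \<Longrightarrow> ssize \<alpha> n \<ge> 1"
proof -
  assume a: "\<alpha> > 0" "n \<ge> 1"
  then have "\<alpha> * real n > 0" by simp
  then have "real (ssize \<alpha> n) > 0" using ssize_ge[of \<alpha> n] by linarith
  then show ?thesis by simp
qed

lemma kl_bound:
  fixes P Q :: "nat \<Rightarrow> 'a::finite pmf" and x :: "'a sample"
  assumes a: "\<alpha> > 0" and b: "\<beta> > 0" and n: "n \<ge> 1"
    and sd: "s = ssize \<alpha> n" and td: "t = ssize \<beta> n"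
    and c: "ereal c \<le> Eexp M1 M2 \<alpha> \<beta> P Q (tX s x) (tY t x)"
  shows "(\<Prod>k\<in>Jset M1 M2 s t. pmf (Dk P Q k) (x k)) \<le> (\<Prod>k\<in>Jset M1 M2 s t. Tf (tX s x) (tY t x) k (x k)) * exp (- (real n * c))"
proof -
  have s1: "s \<ge> 1" using ssize_pos[OF a n] sd by simp
  have t1: "t \<ge> 1" using ssize_pos[OF b n] td by simp
  let ?A = "\<lambda>i. \<Prod>k<s. tX s x i (x (Inl i, k))"
  let ?B = "\<lambda>j. \<Prod>k<t. tY t x j (x (Inr j, k))"
  have L: "(\<Prod>k\<in>Jset M1 M2 s t. pmf (Dk P Q k) (x k)) = (\<Prod>i<M1. \<Prod>k<s. pmf (P i) (x (Inl i, k))) * (\<Prod>j<M2. \<Prod>k<t. pmf (Q j) (x (Inr j, k)))"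
    unfolding prodJ by (simp add: Dk_def)
  have R: "(\<Prod>k\<in>Jset M1 M2 s t. Tf (tX s x) (tY t x) k (x k)) = (\<Prod>i<M1. ?A i) * (\<Prod>j<M2. ?B j)"
    unfolding prodJ by (simp add: Tf_def)
  have W0: "0 \<le> (\<Prod>k\<in>Jset M1 M2 s t. Tf (tX s x) (tY t x) k (x k))"
    by (rule prod_nonneg) (auto simp: Tf_def tX_def tY_def emp_nonneg split: sum.split prod.split)
  show ?thesis
  proof (cases "(\<forall>i<M1. \<forall>a. pmf (P i) a = 0 \<longrightarrow> tX s x i a = 0) \<and> (\<forall>j<M2. \<forall>a. pmf (Q j) a = 0 \<longrightarrow> tY t x j a = 0)")
    case True
    let ?K = "\<lambda>i. klr (tX s x i) (pmf (P i))"
    let ?L = "\<lambda>j. klr (tY t x j) (pmf (Q j))"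
    have rowX: "(\<Prod>k<s. pmf (P i) (x (Inl i, k))) = ?A i * exp (- (real s * ?K i))" if "i < M1" for i
      using row_ac[OF s1, of "pmf (P i)" "\<lambda>k. x (Inl i, k)"] True that by (simp add: tX_def)
    have rowY: "(\<Prod>k<t. pmf (Q j) (x (Inr j, k))) = ?B j * exp (- (real t * ?L j))" if "j < M2" for j
      using row_ac[OF t1, of "pmf (Q j)" "\<lambda>k. x (Inr j, k)"] True that by (simp add: tY_def)
    have K0: "0 \<le> ?K i" if "i < M1" for i
      using True that by (intro gibbs) (auto simp: tX_def emp_probvec[OF s1] sum_pmf_eq_1)
    have L0: "0 \<le> ?L j" if "j < M2" for j
      using True that by (intro gibbs) (auto simp: tY_def emp_probvec[OF t1] sum_pmf_eq_1)
    have klX: "kl (tX s x i) (pmf (P i)) = ereal (?K i)" if "i < M1" for i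
      using True that unfolding kl_def by auto
    have klY: "kl (tY t x j) (pmf (Q j)) = ereal (?L j)" if "j < M2" for j
      using True that unfolding kl_def by auto
    have "Eexp M1 M2 \<alpha> \<beta> P Q (tX s x) (tY t x) = (\<Sum>i<M1. ereal (\<alpha> * ?K i)) + (\<Sum>j<M2. ereal (\<beta> * ?L j))"
      unfolding Eexp_def by (simp add: klX klY)
    also have "\<dots> = ereal (\<alpha> * (\<Sum>i<M1. ?K i) + \<beta> * (\<Sum>j<M2. ?L j))"
      by (simp add: sum_distrib_left)
    finally have cle: "c \<le> \<alpha> * (\<Sum>i<M1. ?K i) + \<beta> * (\<Sum>j<M2. ?L j)" using c by simp
    have SK: "0 \<le> (\<Sum>i<M1. ?K i)" by (rule sum_nonneg) (use K0 in auto)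
    have SL: "0 \<le> (\<Sum>j<M2. ?L j)" by (rule sum_nonneg) (use L0 in auto)
    have "real n * c \<le> real n * (\<alpha> * (\<Sum>i<M1. ?K i) + \<beta> * (\<Sum>j<M2. ?L j))"
      using cle by (simp add: mult_left_mono)
    also have "\<dots> = (\<alpha> * real n) * (\<Sum>i<M1. ?K i) + (\<beta> * real n) * (\<Sum>j<M2. ?L j)"
      by (simp add: algebra_simps)
    also have "\<dots> \<le> real s * (\<Sum>i<M1. ?K i) + real t * (\<Sum>j<M2. ?L j)"
      using ssize_ge[of \<alpha> n] ssize_ge[of \<beta> n] SK SL sd td by (intro add_mono mult_right_mono) auto
    finally have nc: "real n * c \<le> real s * (\<Sum>i<M1. ?K i) + real t * (\<Sum>j<M2. ?L j)" .
    have PX: "(\<Prod>i<M1. \<Prod>k<s. pmf (P i) (x (Inl i, k))) = (\<Prod>i<M1. ?A i) * exp (- (real s * (\<Sum>i<M1. ?K i)))"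
    proof -
      have "(\<Prod>i<M1. \<Prod>k<s. pmf (P i) (x (Inl i, k))) = (\<Prod>i<M1. ?A i * exp (- (real s * ?K i)))"
        by (rule prod.cong) (auto simp: rowX)
      also have "\<dots> = (\<Prod>i<M1. ?A i) * (\<Prod>i<M1. exp (- (real s * ?K i)))"
        by (rule prod.distrib)
      also have "(\<Prod>i<M1. exp (- (real s * ?K i))) = exp (\<Sum>i<M1. - (real s * ?K i))"
        by (simp add: exp_sum)
      also have "(\<Sum>i<M1. - (real s * ?K i)) = - (real s * (\<Sum>i<M1. ?K i))"
        by (simp add: sum_distrib_left sum_negf)
      finally show ?thesis .
    qed
    have PY: "(\<Prod>j<M2. \<Prod>k<t. pmf (Q j) (x (Inr j, k))) = (\<Prod>j<M2. ?B j) * exp (- (real t * (\<Sum>j<M2. ?L j)))"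
    proof -
      have "(\<Prod>j<M2. \<Prod>k<t. pmf (Q j) (x (Inr j, k))) = (\<Prod>j<M2. ?B j * exp (- (real t * ?L j)))"
        by (rule prod.cong) (auto simp: rowY)
      also have "\<dots> = (\<Prod>j<M2. ?B j) * (\<Prod>j<M2. exp (- (real t * ?L j)))"
        by (rule prod.distrib)
      also have "(\<Prod>j<M2. exp (- (real t * ?L j))) = exp (\<Sum>j<M2. - (real t * ?L j))"
        by (simp add: exp_sum)
      also have "(\<Sum>j<M2. - (real t * ?L j)) = - (real t * (\<Sum>j<M2. ?L j))"
        by (simp add: sum_distrib_left sum_negf)
      finally show ?thesis .
    qed
    have "(\<Prod>k\<in>Jset M1 M2 s t. pmf (Dk P Q k) (x k)) = ((\<Prod>i<M1. ?A i) * (\<Prod>j<M2. ?B j)) * exp (- (real s * (\<Sum>i<M1. ?K i) + real t * (\<Sum>j<M2. ?L j)))"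
      unfolding L PX PY by (simp add: exp_add[symmetric] exp_diff algebra_simps)
    also have "\<dots> \<le> ((\<Prod>i<M1. ?A i) * (\<Prod>j<M2. ?B j)) * exp (- (real n * c))"
      using nc W0 unfolding R by (intro mult_left_mono) auto
    finally show ?thesis unfolding R .
  next
    case False
    then have Z: "(\<Prod>k\<in>Jset M1 M2 s t. pmf (Dk P Q k) (x k)) = 0"
    proof (elim disjE[OF de_Morgan_conj[THEN iffD1]])
      assume "\<not> (\<forall>i<M1. \<forall>a. pmf (P i) a = 0 \<longrightarrow> tX s x i a = 0)"
      then obtain i a where ia: "i < M1" "pmf (P i) a = 0" "tX s x i a \<noteq> 0" by blast
      have "(\<Prod>k<s. pmf (P i) (x (Inl i, k))) = 0"
        using ia by (intro row_nonac[of "pmf (P i)" a]) (auto simp: tX_def)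
      then have "(\<Prod>i<M1. \<Prod>k<s. pmf (P i) (x (Inl i, k))) = 0"
        using ia(1) by (intro prod_zero) auto
      then show ?thesis unfolding L by simp
    next
      assume "\<not> (\<forall>j<M2. \<forall>a. pmf (Q j) a = 0 \<longrightarrow> tY t x j a = 0)"
      then obtain j a where ja: "j < M2" "pmf (Q j) a = 0" "tY t x j a \<noteq> 0" by blast
      have "(\<Prod>k<t. pmf (Q j) (x (Inr j, k))) = 0"
        using ja by (intro row_nonac[of "pmf (Q j)" a]) (auto simp: tY_def)
      then have "(\<Prod>j<M2. \<Prod>k<t. pmf (Q j) (x (Inr j, k))) = 0"
        using ja(1) by (intro prod_zero) auto
      then show ?thesis unfolding L by simp
    qed
    have "0 \<le> (\<Prod>k\<in>Jset M1 M2 s t. Tf (tX s x) (tY t x) k (x k)) * exp (- (real n * c))"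
      using W0 by simp
    then show ?thesis unfolding Z .
  qed
qed

definition loc :: "nat \<Rightarrow> nat \<Rightarrow> ((nat \<Rightarrow> 'a \<Rightarrow> real) \<Rightarrow> (nat \<Rightarrow> 'a \<Rightarrow> real) \<Rightarrow> bool) \<Rightarrow> bool" where
  "loc M1 M2 \<Phi> \<longleftrightarrow> (\<forall>X X' Y Y'. (\<forall>i<M1. X i = X' i) \<longrightarrow> (\<forall>j<M2. Y j = Y' j) \<longrightarrow> \<Phi> X Y = \<Phi> X' Y')"

lemma tX_cong: "(\<And>k. k \<in> Jset M1 M2 s t \<Longrightarrow> \<omega> k = x k) \<Longrightarrow> i < M1 \<Longrightarrow> tX s \<omega> i = tX s x i"
  unfolding tX_def by (rule emp_cong) (simp add: inl_in_Jset)

lemma tY_cong: "(\<And>k. k \<in> Jset M1 M2 s t \<Longrightarrow> \<omega> k = x k) \<Longrightarrow> j < M2 \<Longrightarrow> tY t \<omega> j = tY t x j"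
  unfolding tY_def by (rule emp_cong) (simp add: inr_in_Jset)

lemma loc_cong: "loc M1 M2 \<Phi> \<Longrightarrow> (\<And>k. k \<in> Jset M1 M2 s t \<Longrightarrow> \<omega> k = x k) \<Longrightarrow>
    \<Phi> (tX s \<omega>) (tY t \<omega>) = \<Phi> (tX s x) (tY t x)"
  unfolding loc_def using tX_cong[of M1 M2 s t \<omega> x] tY_cong[of M1 M2 s t \<omega> x] by blast

lemma ev_eq:
  assumes "loc M1 M2 \<Phi>"
  shows "{\<omega>. \<Phi> (tX s \<omega>) (tY t \<omega>)} =
    (\<Union>x\<in>{x \<in> PiE (Jset M1 M2 s t) (\<lambda>_. UNIV). \<Phi> (tX s x) (tY t x)}. cyl (Jset M1 M2 s t) x)"
    (is "?L = ?R")
proof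
  show "?L \<subseteq> ?R"
  proof
    fix \<omega> assume w: "\<omega> \<in> ?L"
    let ?x = "restrict \<omega> (Jset M1 M2 s t)"
    have "\<Phi> (tX s ?x) (tY t ?x)" using w loc_cong[OF assms, of s t \<omega> ?x] by simp
    moreover have "\<omega> \<in> cyl (Jset M1 M2 s t) ?x" unfolding cyl_def by simp
    moreover have "?x \<in> PiE (Jset M1 M2 s t) (\<lambda>_. UNIV)" by simp
    ultimately show "\<omega> \<in> ?R" by blast
  qed
next
  show "?R \<subseteq> ?L"
  proof
    fix \<omega> assume "\<omega> \<in> ?R"
    then obtain x where x: "\<Phi> (tX s x) (tY t x)" "\<omega> \<in> cyl (Jset M1 M2 s t) x" by auto
    then show "\<omega> \<in> ?L" using loc_cong[OF assms, of s t \<omega> x] unfolding cyl_def by simp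
  qed
qed

lemma finPiJ: "finite (PiE (Jset M1 M2 s t) (\<lambda>_. UNIV :: 'a::finite set))"
  by (rule finite_PiE) auto

lemma ev_sets:
  assumes "loc M1 M2 \<Phi>"
  shows "{\<omega>. \<Phi> (tX s \<omega>) (tY t \<omega>)} \<in> sets (obs_space P Q)"
proof -
  have f: "finite {x \<in> PiE (Jset M1 M2 s t) (\<lambda>_. UNIV :: 'a set). \<Phi> (tX s x) (tY t x)}"
    by (rule finite_subset[OF _ finPiJ]) auto
  show ?thesis unfolding ev_eq[OF assms]
    by (rule sets.finite_UN[OF f]) (auto intro: cyl_sets)
qed

definition Vs :: "nat \<Rightarrow> ('a::finite \<Rightarrow> real) set" where
  "Vs s = PiE UNIV (\<lambda>_. (\<lambda>c. real c / real s) ` {0..s})"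

lemma card_Vs: "card (Vs s :: ('a::finite \<Rightarrow> real) set) \<le> (s+1) ^ CARD('a)"
proof -
  have "card (Vs s :: ('a \<Rightarrow> real) set) = (\<Prod>a\<in>(UNIV::'a set). card ((\<lambda>c. real c / real s) ` {0..s}))"
    unfolding Vs_def by (rule card_PiE) simp
  also have "\<dots> \<le> (\<Prod>a\<in>(UNIV::'a set). s + 1)"
    by (rule prod_mono) (auto intro: order.trans[OF card_image_le])
  finally show ?thesis by simp
qed

lemma card_types: "card (PiE {..<M} (\<lambda>_. Vs s :: ('a::finite \<Rightarrow> real) set)) \<le> (s+1) ^ (CARD('a) * M)"
proof -
  have "card (PiE {..<M} (\<lambda>_. Vs s :: ('a \<Rightarrow> real) set)) = card (Vs s :: ('a \<Rightarrow> real) set) ^ M"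
    by (simp add: card_PiE)
  also have "\<dots> \<le> ((s+1) ^ CARD('a)) ^ M"
    by (rule power_mono[OF card_Vs]) simp
  finally show ?thesis by (simp add: power_mult)
qed

lemma finite_Vs: "finite (Vs s :: ('a::finite \<Rightarrow> real) set)"
  unfolding Vs_def by (rule finite_PiE) auto

lemma emp_in_Vs: "emp (f :: nat \<Rightarrow> 'a::finite) s \<in> Vs s"
proof -
  have "emp f s a \<in> (\<lambda>c. real c / real s) ` {0..s}" for a
  proof -
    have "card {k. k < s \<and> f k = a} \<le> s"
      using card_mono[of "{..<s}" "{k. k < s \<and> f k = a}"] by auto
    then show ?thesis unfolding emp_def by auto
  qed
  then show ?thesis unfolding Vs_def PiE_UNIV_domain by auto
qed

lemma sanov:
  fixes P Q :: "nat \<Rightarrow> 'a::finite pmf"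
  assumes L: "loc M1 M2 \<Phi>" and s1: "s \<ge> 1" and t1: "t \<ge> 1" and B0: "B \<ge> 0"
    and bnd: "\<And>x. \<Phi> (tX s x) (tY t x) \<Longrightarrow> (\<Prod>k\<in>Jset M1 M2 s t. pmf (Dk P Q k) (x k))
       \<le> (\<Prod>k\<in>Jset M1 M2 s t. Tf (tX s x) (tY t x) k (x k)) * B"
  shows "emeasure (obs_space P Q) {\<omega>. \<Phi> (tX s \<omega>) (tY t \<omega>)}
    \<le> ennreal (real ((s+1) ^ (CARD('a) * M1) * (t+1) ^ (CARD('a) * M2)) * B)"
proof -
  define J where "J = Jset M1 M2 s t"
  define G where "G = {x \<in> PiE J (\<lambda>_. UNIV :: 'a set). \<Phi> (tX s x) (tY t x)}"
  define \<rho> where "\<rho> x = (restrict (tX s x) {..<M1}, restrict (tY t x) {..<M2})" for x :: "'a sample"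
  define Wt where "Wt \<tau> x = (\<Prod>k\<in>J. Tf (fst \<tau>) (snd \<tau>) k (x k))" for \<tau> :: "(nat \<Rightarrow> 'a \<Rightarrow> real) \<times> (nat \<Rightarrow> 'a \<Rightarrow> real)" and x :: "'a sample"
  define TS where "TS = PiE {..<M1} (\<lambda>_. Vs s :: ('a \<Rightarrow> real) set) \<times> PiE {..<M2} (\<lambda>_. Vs t :: ('a \<Rightarrow> real) set)"
  have fJ: "finite J" unfolding J_def by simp
  have fPi: "finite (PiE J (\<lambda>_. UNIV :: 'a set))" using fJ by (intro finite_PiE) auto
  have fG: "finite G" unfolding G_def using fPi by simp
  have Jcases: "\<And>k. k \<in> J \<Longrightarrow> (\<exists>i kk. k = (Inl i, kk) \<and> i < M1) \<or> (\<exists>j kk. k = (Inr j, kk) \<and> j < M2)"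
    unfolding J_def Jset_def by auto
  have W_eq: "(\<Prod>k\<in>J. Tf (tX s x) (tY t x) k (x k)) = Wt (\<rho> x) x" for x
    unfolding Wt_def \<rho>_def
  proof (rule prod.cong[OF refl])
    fix k assume "k \<in> J"
    from Jcases[OF this] show "Tf (tX s x) (tY t x) k (x k) = Tf (fst (restrict (tX s x) {..<M1}, restrict (tY t x) {..<M2})) (snd (restrict (tX s x) {..<M1}, restrict (tY t x) {..<M2})) k (x k)"
      by (auto simp: Tf_def)
  qed
  have Wt0: "0 \<le> Wt \<tau> x" if "\<tau> \<in> \<rho> ` G" for \<tau> x
  proof -
    from that obtain x0 where "\<tau> = \<rho> x0" by auto
    then show ?thesis unfolding Wt_def \<rho>_def
      by (intro prod_nonneg) (auto simp: Tf_def tX_def tY_def emp_nonneg J_def inl_in_Jset inr_in_Jset split: sum.split prod.split)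
  qed
  have Wt1: "(\<Sum>x\<in>PiE J (\<lambda>_. UNIV :: 'a set). Wt \<tau> x) = 1" if "\<tau> \<in> \<rho> ` G" for \<tau>
  proof -
    from that obtain x0 where x0: "\<tau> = \<rho> x0" by auto
    have "(\<Sum>x\<in>PiE J (\<lambda>_. UNIV :: 'a set). Wt \<tau> x) = (\<Prod>k\<in>J. \<Sum>a\<in>(UNIV :: 'a set). Tf (fst \<tau>) (snd \<tau>) k a)"
      unfolding Wt_def by (rule prod_sum_PiE[symmetric]) (auto simp: fJ)
    also have "\<dots> = (\<Prod>k\<in>J. 1)"
    proof (rule prod.cong[OF refl])
      fix k assume "k \<in> J"
      from Jcases[OF this] show "(\<Sum>a\<in>(UNIV :: 'a set). Tf (fst \<tau>) (snd \<tau>) k a) = 1"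
        by (auto simp: x0 \<rho>_def Tf_def tX_def tY_def emp_sum1[OF s1] emp_sum1[OF t1])
    qed
    finally show ?thesis by simp
  qed
  have rhoTS: "\<rho> ` G \<subseteq> TS"
    unfolding TS_def \<rho>_def by (auto simp: tX_def tY_def emp_in_Vs)
  have fTS: "finite TS" unfolding TS_def by (auto intro!: finite_PiE finite_Vs)
  have cardTS: "card TS \<le> (s+1) ^ (CARD('a) * M1) * (t+1) ^ (CARD('a) * M2)"
    unfolding TS_def card_cartesian_product by (intro mult_le_mono card_types)
  have "(\<Sum>x\<in>G. Wt (\<rho> x) x) = (\<Sum>\<tau>\<in>\<rho> ` G. \<Sum>x\<in>{x. x \<in> G \<and> \<rho> x = \<tau>}. Wt (\<rho> x) x)"
    by (rule sum.group[symmetric]) (auto simp: fG)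
  also have "\<dots> = (\<Sum>\<tau>\<in>\<rho> ` G. \<Sum>x\<in>{x. x \<in> G \<and> \<rho> x = \<tau>}. Wt \<tau> x)"
    by (intro sum.cong) auto
  also have "\<dots> \<le> (\<Sum>\<tau>\<in>\<rho> ` G. \<Sum>x\<in>PiE J (\<lambda>_. UNIV :: 'a set). Wt \<tau> x)"
    by (intro sum_mono sum_mono2) (auto simp: fPi G_def Wt0)
  also have "\<dots> = real (card (\<rho> ` G))"
    by (simp add: Wt1)
  also have "\<dots> \<le> real (card TS)"
    using card_mono[OF fTS rhoTS] by simp
  also have "\<dots> \<le> real ((s+1) ^ (CARD('a) * M1) * (t+1) ^ (CARD('a) * M2))"
    using cardTS by linarith
  finally have sumW: "(\<Sum>x\<in>G. Wt (\<rho> x) x) \<le> real ((s+1) ^ (CARD('a) * M1) * (t+1) ^ (CARD('a) * M2))" .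
  have "(\<Sum>x\<in>G. \<Prod>k\<in>J. pmf (Dk P Q k) (x k)) \<le> (\<Sum>x\<in>G. Wt (\<rho> x) x * B)"
    by (rule sum_mono) (use bnd W_eq in \<open>auto simp: G_def J_def\<close>)
  also have "\<dots> = (\<Sum>x\<in>G. Wt (\<rho> x) x) * B" by (simp add: sum_distrib_right)
  also have "\<dots> \<le> real ((s+1) ^ (CARD('a) * M1) * (t+1) ^ (CARD('a) * M2)) * B"
    by (rule mult_right_mono[OF sumW B0])
  finally have real_bnd: "(\<Sum>x\<in>G. \<Prod>k\<in>J. pmf (Dk P Q k) (x k)) \<le> real ((s+1) ^ (CARD('a) * M1) * (t+1) ^ (CARD('a) * M2)) * B" .
  have "emeasure (obs_space P Q) {\<omega>. \<Phi> (tX s \<omega>) (tY t \<omega>)} = emeasure (obs_space P Q) (\<Union>x\<in>G. cyl J x)"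
    unfolding ev_eq[OF L] G_def J_def ..
  also have "\<dots> \<le> (\<Sum>x\<in>G. emeasure (obs_space P Q) (cyl J x))"
    by (rule emeasure_subadditive_finite) (auto simp: fG fJ cyl_sets)
  also have "\<dots> = (\<Sum>x\<in>G. ennreal (\<Prod>k\<in>J. pmf (Dk P Q k) (x k)))"
    by (intro sum.cong refl) (simp add: cyl_emeasure fJ prod_ennreal)
  also have "\<dots> = ennreal (\<Sum>x\<in>G. \<Prod>k\<in>J. pmf (Dk P Q k) (x k))"
    by (intro sum_ennreal) (simp add: prod_nonneg)
  also have "\<dots> \<le> ennreal (real ((s+1) ^ (CARD('a) * M1) * (t+1) ^ (CARD('a) * M2)) * B)"
    by (rule ennreal_leI[OF real_bnd])
  finally show ?thesis .
qed

lemma poly_exp_ev: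
  fixes C d :: real and K :: nat
  assumes d: "d > 0"
  shows "eventually (\<lambda>n. C * real n ^ K * exp (- (real n * d)) \<le> 1) sequentially"
proof -
  have lim1: "((\<lambda>x. x ^ K / exp x) \<longlongrightarrow> (0::real)) at_top" by (rule tendsto_power_div_exp_0)
  have f: "filterlim (\<lambda>n. real n * d) at_top sequentially"
    by (rule filterlim_at_top_mult_tendsto_pos[OF tendsto_const d filterlim_real_sequentially])
  have "((\<lambda>n. (real n * d) ^ K / exp (real n * d)) \<longlongrightarrow> 0) sequentially"
    by (rule filterlim_compose[OF lim1 f])
  then have "((\<lambda>n. (C / d ^ K) * ((real n * d) ^ K / exp (real n * d))) \<longlongrightarrow> (C / d ^ K) * 0) sequentially"
    by (intro tendsto_mult tendsto_const)
  then have "((\<lambda>n. (C / d ^ K) * ((real n * d) ^ K / exp (real n * d))) \<longlongrightarrow> 0) sequentially" by simp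
  then have "eventually (\<lambda>n. (C / d ^ K) * ((real n * d) ^ K / exp (real n * d)) < 1) sequentially"
    by (rule order_tendstoD) simp
  then show ?thesis
  proof (rule eventually_mono)
    fix n assume "(C / d ^ K) * ((real n * d) ^ K / exp (real n * d)) < 1"
    moreover have "(C / d ^ K) * ((real n * d) ^ K / exp (real n * d)) = C * real n ^ K * exp (- (real n * d))"
      using d by (simp add: power_mult_distrib exp_minus field_simps)
    ultimately show "C * real n ^ K * exp (- (real n * d)) \<le> 1" by simp
  qed
qed

lemma ssize_le: "\<alpha> > 0 \<Longrightarrow> n \<ge> 1 \<Longrightarrow> real (ssize \<alpha> n + 1) \<le> (\<alpha> + 2) * real n"
proof -
  assume a: "\<alpha> > 0" "n \<ge> 1"
  have "real (ssize \<alpha> n) \<le> \<alpha> * real n + 1"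
    unfolding ssize_def using a by (simp add: of_nat_nat)
  then show ?thesis using a by (simp add: algebra_simps)
qed

lemma exp_const_ev:
  fixes C e :: real
  assumes e: "e > 0"
  shows "eventually (\<lambda>N. C * exp (- (real N * e)) \<le> 1) sequentially"
proof -
  have "(\<lambda>N. exp (- e) ^ N) \<longlonglongrightarrow> 0"
    by (rule LIMSEQ_realpow_zero) (use e in auto)
  then have "(\<lambda>N. C * exp (- e) ^ N) \<longlonglongrightarrow> C * 0" by (intro tendsto_mult tendsto_const)
  then have t: "(\<lambda>N. C * exp (- e) ^ N) \<longlonglongrightarrow> 0" by simp
  have "eventually (\<lambda>N. C * exp (- e) ^ N < 1) sequentially"
    using order_tendstoD(2)[OF t, of 1] by simp
  then show ?thesis
    by (rule eventually_mono) (simp add: exp_of_nat_mult[symmetric] mult.commute)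
qed

lemma tail_bound:
  fixes F :: "nat \<Rightarrow> 'x set" and M :: "'x measure"
  assumes sets: "\<And>n. F n \<in> sets M"
    and bnd: "\<And>n. n \<ge> 1 \<Longrightarrow> emeasure M (F n) \<le> ennreal (real ((ssize \<alpha> n + 1) ^ A * (ssize \<beta> n + 1) ^ B) * exp (- (real n * c)))"
    and a: "\<alpha> > 0" and b: "\<beta> > 0" and c': "0 \<le> c'" "c' < c"
  shows "eventually (\<lambda>N. (\<Sum>n. emeasure M (if N - 1 \<le> n then F n else {})) \<le> ennreal (exp (- (real N * c')))) sequentially"
proof -
  define c2 where "c2 = (c + c') / 2"
  define d where "d = c - c2"
  have d0: "d > 0" and c2c: "c2 > c'" and c20: "c2 > 0" using c' by (auto simp: d_def c2_def)
  define C where "C = (\<alpha> + 2) ^ A * (\<beta> + 2) ^ B"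
  obtain n0 where n0: "\<And>n. n \<ge> n0 \<Longrightarrow> C * real n ^ (A + B) * exp (- (real n * d)) \<le> 1"
    using poly_exp_ev[OF d0, of C "A + B"] unfolding eventually_sequentially by blast
  have tb: "emeasure M (F n) \<le> ennreal (exp (- (real n * c2)))" if n: "n \<ge> n0" "n \<ge> 1" for n
  proof -
    have "real ((ssize \<alpha> n + 1) ^ A * (ssize \<beta> n + 1) ^ B) = real (ssize \<alpha> n + 1) ^ A * real (ssize \<beta> n + 1) ^ B"
      by simp
    also have "\<dots> \<le> ((\<alpha> + 2) * real n) ^ A * ((\<beta> + 2) * real n) ^ B"
      using ssize_le[OF a n(2)] ssize_le[OF b n(2)] by (intro mult_mono power_mono) auto
    also have "\<dots> = C * real n ^ (A + B)" by (simp add: C_def power_mult_distrib power_add)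
    finally have p: "real ((ssize \<alpha> n + 1) ^ A * (ssize \<beta> n + 1) ^ B) \<le> C * real n ^ (A + B)" .
    have "real ((ssize \<alpha> n + 1) ^ A * (ssize \<beta> n + 1) ^ B) * exp (- (real n * c))
        \<le> C * real n ^ (A + B) * exp (- (real n * c))"
      by (rule mult_right_mono[OF p]) simp
    also have "\<dots> = (C * real n ^ (A + B) * exp (- (real n * d))) * exp (- (real n * c2))"
      by (simp add: d_def algebra_simps flip: exp_add)
    also have "\<dots> \<le> 1 * exp (- (real n * c2))"
      by (rule mult_right_mono[OF n0[OF n(1)]]) simp
    finally have "real ((ssize \<alpha> n + 1) ^ A * (ssize \<beta> n + 1) ^ B) * exp (- (real n * c)) \<le> exp (- (real n * c2))"
      by simp
    then show ?thesis by (rule order.trans[OF bnd[OF n(2)] ennreal_leI])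
  qed
  define r where "r = exp (- c2)"
  have r: "0 < r" "r < 1" using c20 by (auto simp: r_def)
  have ev1: "eventually (\<lambda>N. N \<ge> n0 + 2) sequentially" by (rule eventually_ge_at_top)
  have ev2: "eventually (\<lambda>N. (exp c2 / (1 - r)) * exp (- (real N * (c2 - c'))) \<le> 1) sequentially"
    by (rule exp_const_ev) (use c2c in simp)
  show ?thesis
    using ev1 ev2
  proof (eventually_elim)
    case (elim N)
    define L where "L = N - 1"
    have L: "L \<ge> n0" "L \<ge> 1" "real L = real N - 1" using elim(1) by (auto simp: L_def)
    define g where "g n = (if L \<le> n then r ^ n else 0)" for n
    have gs: "g sums (r ^ L / (1 - r))"
    proof -
      have "(\<lambda>i. r ^ L * r ^ i) sums (r ^ L * (1 / (1 - r)))"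
        by (rule sums_mult[OF geometric_sums]) (use r in simp)
      then have "(\<lambda>i. g (i + L)) sums (r ^ L / (1 - r))"
        by (simp add: g_def power_add mult.commute)
      then show ?thesis by (subst (asm) sums_zero_iff_shift) (auto simp: g_def)
    qed
    have g0: "0 \<le> g n" for n using r by (simp add: g_def)
    have "(\<Sum>n. emeasure M (if N - 1 \<le> n then F n else {})) \<le> (\<Sum>n. ennreal (g n))"
    proof (rule suminf_le)
      fix n show "emeasure M (if N - 1 \<le> n then F n else {}) \<le> ennreal (g n)"
        using tb[of n] L by (auto simp: g_def r_def L_def exp_of_nat_mult[symmetric] mult.commute)
    qed auto
    also have "\<dots> = ennreal (r ^ L / (1 - r))"
      using gs g0 by (simp add: suminf_ennreal2 sums_summable sums_unique[symmetric])
    finally have S: "(\<Sum>n. emeasure M (if N - 1 \<le> n then F n else {})) \<le> ennreal (r ^ L / (1 - r))" .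
    have "r ^ L / (1 - r) = (exp c2 / (1 - r)) * exp (- (real N * (c2 - c'))) * exp (- (real N * c'))"
      using r L(3) by (simp add: r_def exp_of_nat_mult[symmetric] field_simps flip: exp_add) (metis distrib_left mult.right_neutral)
    also have "\<dots> \<le> 1 * exp (- (real N * c'))"
      by (rule mult_right_mono[OF elim(2)]) simp
    finally have rb: "r ^ L / (1 - r) \<le> exp (- (real N * c'))" by simp
    show ?case by (rule order.trans[OF S ennreal_leI[OF rb]])
  qed
qed

definition gx :: "real \<Rightarrow> real" where "gx x = x * ln x"

lemma gx_bound: "\<bar>x\<bar> \<le> 1 \<Longrightarrow> \<bar>gx x\<bar> \<le> 2 * sqrt \<bar>x\<bar>"
proof (cases "x = 0")
  case True then show ?thesis by (simp add: gx_def)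
next
  case False
  assume x1: "\<bar>x\<bar> \<le> 1"
  define y where "y = \<bar>x\<bar>"
  have y0: "y > 0" and y1: "y \<le> 1" using False x1 by (auto simp: y_def)
  have lnx: "ln x = ln y" unfolding y_def using False by (simp add: ln_real_def)
  have sy: "sqrt y > 0" using y0 by simp
  have h1: "ln (1 / sqrt y) \<le> 1 / sqrt y - 1" by (rule ln_le_minus_one) (use sy in simp)
  have h2: "ln (1 / sqrt y) = - (ln y / 2)" using y0 by (simp add: ln_div ln_sqrt)
  have A: "- ln y \<le> 2 * (1 / sqrt y)" using h1 h2 by linarith
  have lny: "ln y \<le> 0" using y0 y1 by simp
  have E: "\<bar>y * ln y\<bar> = y * (- ln y)" using y0 lny by (simp add: abs_mult)
  have "y * (- ln y) \<le> y * (2 * (1 / sqrt y))" by (rule mult_left_mono[OF A]) (use y0 in simp)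
  then have "\<bar>y * ln y\<bar> \<le> y * (2 * (1 / sqrt y))" unfolding E .
  also have "y * (2 * (1 / sqrt y)) = 2 * sqrt y"
  proof -
    have "y * (2 * (1 / sqrt y)) = 2 * (y / sqrt y)" by simp
    also have "y / sqrt y = sqrt y" using y0 by (simp add: real_div_sqrt)
    finally show ?thesis .
  qed
  finally have "\<bar>y * ln y\<bar> \<le> 2 * sqrt y" .
  moreover have "\<bar>gx x\<bar> = \<bar>y * ln y\<bar>" unfolding gx_def lnx y_def by (simp add: abs_mult)
  ultimately show ?thesis by (simp add: y_def)
qed

lemma isCont_gx: "isCont gx x0"
proof (cases "x0 = 0")
  case False
  then show ?thesis unfolding gx_def by (intro continuous_intros isCont_ln) 
next
  case True
  have t: "(gx \<longlongrightarrow> 0) (at 0)"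
  proof (rule tendsto_sandwich[where f = "\<lambda>x. - (2 * sqrt \<bar>x\<bar>)" and h = "\<lambda>x. 2 * sqrt \<bar>x\<bar>"])
    have ev: "eventually (\<lambda>x::real. \<bar>x\<bar> < 1) (at 0)"
      using eventually_at[of "\<lambda>x::real. \<bar>x\<bar> < 1" 0 UNIV] by (auto intro: exI[of _ 1] simp: dist_real_def)
    show "eventually (\<lambda>x. - (2 * sqrt \<bar>x\<bar>) \<le> gx x) (at 0)"
      using ev
    proof eventually_elim
      case (elim x)
      then have B: "\<bar>gx x\<bar> \<le> 2 * sqrt \<bar>x\<bar>" using gx_bound[of x] by simp
      show ?case using abs_le_D2[OF B] by linarith
    qed
    show "eventually (\<lambda>x. gx x \<le> 2 * sqrt \<bar>x\<bar>) (at 0)"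
      using ev
    proof eventually_elim
      case (elim x)
      then have B: "\<bar>gx x\<bar> \<le> 2 * sqrt \<bar>x\<bar>" using gx_bound[of x] by simp
      show ?case using abs_le_D1[OF B] by linarith
    qed
    have "((\<lambda>x::real. 2 * sqrt \<bar>x\<bar>) \<longlongrightarrow> 2 * sqrt \<bar>0\<bar>) (at 0)"
      by (intro tendsto_intros)
    then show "((\<lambda>x::real. 2 * sqrt \<bar>x\<bar>) \<longlongrightarrow> 0) (at 0)" by simp
    then show "((\<lambda>x::real. - (2 * sqrt \<bar>x\<bar>)) \<longlongrightarrow> 0) (at 0)"
      using tendsto_minus by fastforce
  qed
  then show ?thesis using True unfolding isCont_def by (simp add: gx_def)
qed

definition GJSg :: "real \<Rightarrow> real \<Rightarrow> ('a::finite \<Rightarrow> real) \<Rightarrow> ('a \<Rightarrow> real) \<Rightarrow> real" where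
  "GJSg \<alpha> \<beta> p q = (\<Sum>a\<in>UNIV. \<alpha> * gx (p a) + \<beta> * gx (q a) - (\<alpha> + \<beta>) * gx ((\<alpha> * p a + \<beta> * q a) / (\<alpha> + \<beta>)))"

lemma GJS_eq_GJSg:
  fixes p q :: "'a::finite \<Rightarrow> real"
  assumes a: "\<alpha> > 0" and b: "\<beta> > 0" and p: "\<And>a. p a \<ge> 0" and q: "\<And>a. q a \<ge> 0"
  shows "GJS p q \<alpha> \<beta> = GJSg \<alpha> \<beta> p q"
proof -
  let ?R = "mixR \<alpha> \<beta> p q"
  have R: "?R a = (\<alpha> * p a + \<beta> * q a) / (\<alpha> + \<beta>)" for a by (simp add: mixR_def)
  have tp: "(if p a = 0 then 0 else p a * ln (p a / ?R a)) = gx (p a) - p a * ln (?R a)" for a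
  proof (cases "p a = 0")
    case True then show ?thesis by (simp add: gx_def)
  next
    case False
    then have pa: "p a > 0" using p[of a] by linarith
    have "?R a > 0" unfolding R using a b pa q[of a] by (intro divide_pos_pos add_pos_nonneg) auto
    then show ?thesis using False pa by (simp add: gx_def ln_div algebra_simps)
  qed
  have tq: "(if q a = 0 then 0 else q a * ln (q a / ?R a)) = gx (q a) - q a * ln (?R a)" for a
  proof (cases "q a = 0")
    case True then show ?thesis by (simp add: gx_def)
  next
    case False
    then have qa: "q a > 0" using q[of a] by linarith
    have "?R a > 0" unfolding R using a b qa p[of a] by (intro divide_pos_pos add_nonneg_pos) auto
    then show ?thesis using False qa by (simp add: gx_def ln_div algebra_simps)
  qed
  have comb: "\<alpha> * (gx (p a) - p a * ln (?R a)) + \<beta> * (gx (q a) - q a * ln (?R a))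
      = \<alpha> * gx (p a) + \<beta> * gx (q a) - (\<alpha> + \<beta>) * gx ((\<alpha> * p a + \<beta> * q a) / (\<alpha> + \<beta>))" for a
  proof -
    have "(\<alpha> + \<beta>) * gx ((\<alpha> * p a + \<beta> * q a) / (\<alpha> + \<beta>)) = (\<alpha> * p a + \<beta> * q a) * ln (?R a)"
      unfolding gx_def R using a b by simp
    then show ?thesis by (simp add: algebra_simps)
  qed
  show ?thesis
    unfolding GJS_def GJSg_def klr_def tp tq
    by (simp only: sum_distrib_left sum.distrib[symmetric] comb)
qed

lemma hell_scalar:
  fixes w p :: real
  assumes w: "w \<ge> 0" and p: "p \<ge> 0" and ac: "p = 0 \<Longrightarrow> w = 0"
  shows "2 * w - 2 * (sqrt w * sqrt p) \<le> (if w = 0 then 0 else w * ln (w / p))"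
proof (cases "w = 0")
  case True then show ?thesis by simp
next
  case False
  then have w0: "w > 0" using w by linarith
  then have p0: "p > 0" using ac p by fastforce
  define r where "r = sqrt p / sqrt w"
  have r0: "r > 0" using w0 p0 by (simp add: r_def)
  have lr: "ln r \<le> r - 1" by (rule ln_le_minus_one[OF r0])
  have "ln r = (ln p - ln w) / 2" using w0 p0 by (simp add: r_def ln_div ln_sqrt)
  then have lwp: "ln (w / p) = - 2 * ln r" using w0 p0 by (simp add: ln_div)
  have wr: "w * r = sqrt w * sqrt p"
  proof -
    have "w * r = (w / sqrt w) * sqrt p" by (simp add: r_def)
    also have "w / sqrt w = sqrt w" using w0 by (simp add: real_div_sqrt)
    finally show ?thesis .
  qed
  have "2 * w - 2 * (sqrt w * sqrt p) = - 2 * w * (r - 1)" using wr by (simp add: algebra_simps)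
  also have "\<dots> \<le> - 2 * w * ln r" using lr w0 by (simp add: mult_left_mono)
  also have "\<dots> = w * ln (w / p)" using lwp by simp
  finally show ?thesis using False by simp
qed

lemma klr_hell:
  fixes \<Omega> p :: "'a::finite \<Rightarrow> real"
  assumes O: "\<Omega> \<in> probvec" and p: "p \<in> probvec" and ac: "\<And>a. p a = 0 \<Longrightarrow> \<Omega> a = 0"
  shows "(\<Sum>a\<in>UNIV. (sqrt (\<Omega> a) - sqrt (p a))^2) \<le> klr \<Omega> p"
proof -
  have O0: "\<And>a. \<Omega> a \<ge> 0" and O1: "sum \<Omega> UNIV = 1" using O by (auto simp: probvec_def)
  have p0: "\<And>a. p a \<ge> 0" and p1: "sum p UNIV = 1" using p by (auto simp: probvec_def)
  have sq: "(sqrt (\<Omega> a) - sqrt (p a))^2 = \<Omega> a + p a - 2 * (sqrt (\<Omega> a) * sqrt (p a))" for a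
    using O0[of a] p0[of a] by (simp add: power2_diff algebra_simps)
  have "(\<Sum>a\<in>UNIV. (sqrt (\<Omega> a) - sqrt (p a))^2) = sum \<Omega> UNIV + sum p UNIV - (\<Sum>a\<in>UNIV. 2 * (sqrt (\<Omega> a) * sqrt (p a)))"
    unfolding sq by (simp add: sum.distrib sum_subtractf)
  also have "\<dots> = (\<Sum>a\<in>UNIV. 2 * \<Omega> a - 2 * (sqrt (\<Omega> a) * sqrt (p a)))"
    using O1 p1 by (simp add: sum_subtractf sum_distrib_left[symmetric])
  also have "\<dots> \<le> klr \<Omega> p"
    unfolding klr_def by (rule sum_mono) (rule hell_scalar[OF O0 p0 ac])
  finally show ?thesis .
qed

lemma probvec_le1: "\<Omega> \<in> probvec \<Longrightarrow> \<Omega> (a::'a::finite) \<le> 1"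
  unfolding probvec_def using member_le_sum[of a UNIV \<Omega>] by auto

lemma kl_close:
  fixes \<Omega> :: "'a::finite \<Rightarrow> real"
  assumes O: "\<Omega> \<in> probvec" and k: "kl \<Omega> (pmf P) < ereal \<eta>"
  shows "\<bar>\<Omega> a - pmf P a\<bar> \<le> 2 * sqrt \<eta>"
proof -
  have ac: "\<And>a. pmf P a = 0 \<Longrightarrow> \<Omega> a = 0" using k unfolding kl_def by (auto split: if_splits)
  then have "klr \<Omega> (pmf P) < \<eta>" using k unfolding kl_def by auto
  moreover have "(sqrt (\<Omega> a) - sqrt (pmf P a))^2 \<le> (\<Sum>a\<in>UNIV. (sqrt (\<Omega> a) - sqrt (pmf P a))^2)"
    by (rule member_le_sum) auto
  moreover note klr_hell[OF O pmf_probvec[of P] ac]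
  ultimately have "(sqrt (\<Omega> a) - sqrt (pmf P a))^2 \<le> \<eta>" by linarith
  then have d: "\<bar>sqrt (\<Omega> a) - sqrt (pmf P a)\<bar> \<le> sqrt \<eta>"
    using real_sqrt_le_mono by fastforce
  have O0: "\<Omega> a \<ge> 0" using O by (simp add: probvec_def)
  have s1: "sqrt (\<Omega> a) + sqrt (pmf P a) \<le> 2"
  proof -
    have "sqrt (\<Omega> a) \<le> sqrt 1" by (rule real_sqrt_le_mono[OF probvec_le1[OF O, of a]])
    moreover have "sqrt (pmf P a) \<le> sqrt 1" by (rule real_sqrt_le_mono[OF probvec_le1[OF pmf_probvec, of P a]])
    ultimately show ?thesis unfolding real_sqrt_one by linarith
  qed
  have "\<Omega> a - pmf P a = (sqrt (\<Omega> a) - sqrt (pmf P a)) * (sqrt (\<Omega> a) + sqrt (pmf P a))"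
    using O0 by (simp add: algebra_simps)
  moreover have nn: "sqrt (\<Omega> a) + sqrt (pmf P a) \<ge> 0" using O0 by simp
  ultimately have "\<bar>\<Omega> a - pmf P a\<bar> = \<bar>sqrt (\<Omega> a) - sqrt (pmf P a)\<bar> * (sqrt (\<Omega> a) + sqrt (pmf P a))"
    by (simp only: abs_mult abs_of_nonneg[OF nn])
  also have "\<dots> \<le> sqrt \<eta> * 2"
  proof -
    have e0: "0 \<le> sqrt \<eta>" using d abs_ge_zero[of "sqrt (\<Omega> a) - sqrt (pmf P a)"] by linarith
    show ?thesis by (rule mult_mono[OF d s1 e0 nn])
  qed
  finally show ?thesis by simp
qed

lemma kl_nonneg: "\<Omega> \<in> probvec \<Longrightarrow> 0 \<le> kl \<Omega> (pmf (P :: 'a::finite pmf))"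
  unfolding kl_def using gibbs[of \<Omega> "pmf P"] by (auto simp: sum_pmf_eq_1)

lemma akl_nonneg: "\<alpha> > 0 \<Longrightarrow> \<Omega> \<in> probvec \<Longrightarrow> 0 \<le> ereal \<alpha> * kl \<Omega> (pmf (P :: 'a::finite pmf))"
  by (rule ereal_0_le_mult) (auto intro: kl_nonneg)

lemma sum_ge_member:
  fixes f :: "nat \<Rightarrow> ereal"
  assumes "i < M" "\<And>k. k < M \<Longrightarrow> 0 \<le> f k"
  shows "f i \<le> (\<Sum>k<M. f k)"
proof -
  have "(\<Sum>k<M. f k) = f i + (\<Sum>k\<in>{..<M}-{i}. f k)" by (rule sum.remove) (use assms in auto)
  moreover have "0 \<le> (\<Sum>k\<in>{..<M}-{i}. f k)" by (rule sum_nonneg) (use assms in auto)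
  ultimately show ?thesis by (simp add: add_increasing2)
qed

lemma Eexp_geX:
  assumes "\<forall>i<M1. \<Omega> i \<in> probvec" "\<forall>j<M2. \<Psi> j \<in> probvec" "\<alpha> > 0" "\<beta> > 0" "i < M1"
  shows "ereal \<alpha> * kl (\<Omega> i) (pmf (P i)) \<le> Eexp M1 M2 \<alpha> \<beta> P Q \<Omega> \<Psi>"
proof -
  have "ereal \<alpha> * kl (\<Omega> i) (pmf (P i)) \<le> (\<Sum>i<M1. ereal \<alpha> * kl (\<Omega> i) (pmf (P i)))"
    using assms by (intro sum_ge_member) (auto intro!: akl_nonneg)
  also have "\<dots> \<le> Eexp M1 M2 \<alpha> \<beta> P Q \<Omega> \<Psi>"
    unfolding Eexp_def using assms by (intro add_increasing2 sum_nonneg) (auto intro!: akl_nonneg)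
  finally show ?thesis .
qed

lemma Eexp_geY:
  assumes "\<forall>i<M1. \<Omega> i \<in> probvec" "\<forall>j<M2. \<Psi> j \<in> probvec" "\<alpha> > 0" "\<beta> > 0" "j < M2"
  shows "ereal \<beta> * kl (\<Psi> j) (pmf (Q j)) \<le> Eexp M1 M2 \<alpha> \<beta> P Q \<Omega> \<Psi>"
proof -
  have "ereal \<beta> * kl (\<Psi> j) (pmf (Q j)) \<le> (\<Sum>j<M2. ereal \<beta> * kl (\<Psi> j) (pmf (Q j)))"
    using assms by (intro sum_ge_member) (auto intro!: akl_nonneg)
  also have "\<dots> \<le> Eexp M1 M2 \<alpha> \<beta> P Q \<Omega> \<Psi>"
    unfolding Eexp_def using assms by (intro add_increasing sum_nonneg) (auto intro!: akl_nonneg)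
  finally show ?thesis .
qed

lemma Eexp_nonneg:
  assumes "\<forall>i<M1. \<Omega> i \<in> probvec" "\<forall>j<M2. \<Psi> j \<in> probvec" "\<alpha> > 0" "\<beta> > 0"
  shows "0 \<le> Eexp M1 M2 \<alpha> \<beta> P Q \<Omega> \<Psi>"
  unfolding Eexp_def using assms by (intro add_nonneg_nonneg sum_nonneg) (auto intro!: akl_nonneg)

lemma GJSg_tendsto:
  assumes "\<alpha> + \<beta> \<noteq> 0" "\<And>a. (\<lambda>k. f k a) \<longlonglongrightarrow> p a" "\<And>a. (\<lambda>k. g k a) \<longlonglongrightarrow> q a"
  shows "(\<lambda>k. GJSg \<alpha> \<beta> (f k) (g k)) \<longlonglongrightarrow> GJSg \<alpha> \<beta> p q"
  unfolding GJSg_def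
  by (intro tendsto_sum tendsto_diff tendsto_add tendsto_mult tendsto_const isCont_tendsto_compose[OF isCont_gx]
      tendsto_divide assms)

lemma Gm_GJSg:
  assumes "\<alpha> > 0" "\<beta> > 0" "m \<subseteq> {..<M1} \<times> {..<M2}"
    "\<forall>i<M1. \<forall>a. 0 \<le> \<Omega> i a" "\<forall>j<M2. \<forall>a. 0 \<le> \<Psi> j a"
  shows "Gm m \<alpha> \<beta> \<Omega> \<Psi> = (\<Sum>z\<in>m. GJSg \<alpha> \<beta> (\<Omega> (fst z)) (\<Psi> (snd z)))"
  unfolding Gm_def
proof (rule sum.cong[OF refl])
  fix z assume "z \<in> m"
  then have "fst z < M1" "snd z < M2" using assms(3) by auto
  then show "(case z of (i, j) \<Rightarrow> GJS (\<Omega> i) (\<Psi> j) \<alpha> \<beta>) = GJSg \<alpha> \<beta> (\<Omega> (fst z)) (\<Psi> (snd z))"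
    using assms by (auto simp: case_prod_beta intro!: GJS_eq_GJSg)
qed

lemma cont_delta:
  fixes Pv Qv :: "nat \<Rightarrow> 'a::finite \<Rightarrow> real"
  assumes a: "\<alpha> > 0" and b: "\<beta> > 0" and m: "m \<subseteq> {..<M1} \<times> {..<M2}"
    and P0: "\<forall>i<M1. \<forall>a. 0 \<le> Pv i a" and Q0: "\<forall>j<M2. \<forall>a. 0 \<le> Qv j a"
    and v: "v < Gm m \<alpha> \<beta> Pv Qv"
  shows "\<exists>\<delta>>0. \<forall>\<Omega> \<Psi>. (\<forall>i<M1. \<forall>a. 0 \<le> \<Omega> i a) \<longrightarrow> (\<forall>j<M2. \<forall>a. 0 \<le> \<Psi> j a) \<longrightarrow>
      (\<forall>i<M1. \<forall>a. \<bar>\<Omega> i a - Pv i a\<bar> < \<delta>) \<longrightarrow> (\<forall>j<M2. \<forall>a. \<bar>\<Psi> j a - Qv j a\<bar> < \<delta>) \<longrightarrow>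
      v < Gm m \<alpha> \<beta> \<Omega> \<Psi>"
proof (rule ccontr)
  define C where "C \<delta> \<Omega> \<Psi> \<longleftrightarrow> (\<forall>i<M1. \<forall>a. 0 \<le> \<Omega> i a) \<and> (\<forall>j<M2. \<forall>a. 0 \<le> \<Psi> j a) \<and>
      (\<forall>i<M1. \<forall>a. \<bar>\<Omega> i a - Pv i a\<bar> < \<delta>) \<and> (\<forall>j<M2. \<forall>a. \<bar>\<Psi> j a - Qv j a\<bar> < \<delta>) \<and>
      \<not> v < Gm m \<alpha> \<beta> \<Omega> \<Psi>" for \<delta> \<Omega> \<Psi>
  assume "\<not> ?thesis"
  then have H: "\<forall>\<delta>>0. \<exists>\<Omega> \<Psi>. C \<delta> \<Omega> \<Psi>" unfolding C_def by blast
  have "\<forall>k. \<exists>\<Omega> \<Psi>. C (1 / real (Suc k)) \<Omega> \<Psi>" using H by simp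
  then obtain Os Ps where OP: "\<And>k. C (1 / real (Suc k)) (Os k) (Ps k)" by metis
  have Olim: "(\<lambda>k. Os k i a) \<longlonglongrightarrow> Pv i a" if "i < M1" for i a
  proof (rule LIM_zero_cancel, rule LIMSEQ_norm_0)
    fix k show "norm (Os k i a - Pv i a) < 1 / real (Suc k)" using OP[of k] that unfolding C_def by auto
  qed
  have Plim: "(\<lambda>k. Ps k j a) \<longlonglongrightarrow> Qv j a" if "j < M2" for j a
  proof (rule LIM_zero_cancel, rule LIMSEQ_norm_0)
    fix k show "norm (Ps k j a - Qv j a) < 1 / real (Suc k)" using OP[of k] that unfolding C_def by auto
  qed
  have eqk: "Gm m \<alpha> \<beta> (Os k) (Ps k) = (\<Sum>z\<in>m. GJSg \<alpha> \<beta> (Os k (fst z)) (Ps k (snd z)))" for k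
    using OP[of k] unfolding C_def by (intro Gm_GJSg[OF a b m]) auto
  have eq0: "Gm m \<alpha> \<beta> Pv Qv = (\<Sum>z\<in>m. GJSg \<alpha> \<beta> (Pv (fst z)) (Qv (snd z)))"
    by (rule Gm_GJSg[OF a b m P0 Q0])
  have "(\<lambda>k. \<Sum>z\<in>m. GJSg \<alpha> \<beta> (Os k (fst z)) (Ps k (snd z))) \<longlonglongrightarrow> (\<Sum>z\<in>m. GJSg \<alpha> \<beta> (Pv (fst z)) (Qv (snd z)))"
  proof (rule tendsto_sum)
    fix z assume "z \<in> m"
    then have "fst z < M1" "snd z < M2" using m by auto
    then show "(\<lambda>k. GJSg \<alpha> \<beta> (Os k (fst z)) (Ps k (snd z))) \<longlonglongrightarrow> GJSg \<alpha> \<beta> (Pv (fst z)) (Qv (snd z))"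
      using a b by (intro GJSg_tendsto Olim Plim) auto
  qed
  then have lim: "(\<lambda>k. Gm m \<alpha> \<beta> (Os k) (Ps k)) \<longlonglongrightarrow> Gm m \<alpha> \<beta> Pv Qv" unfolding eqk eq0 .
  have "Gm m \<alpha> \<beta> Pv Qv \<le> v"
    by (rule LIMSEQ_le_const2[OF lim]) (use OP in \<open>auto simp: C_def not_less\<close>)
  then show False using v by simp
qed

lemma cont_gap:
  fixes P Q :: "nat \<Rightarrow> 'a::finite pmf"
  assumes a: "\<alpha> > 0" and b: "\<beta> > 0" and m: "m \<subseteq> {..<M1} \<times> {..<M2}"
    and v: "v < Gm m \<alpha> \<beta> (\<lambda>i. pmf (P i)) (\<lambda>j. pmf (Q j))"
  shows "\<exists>c>0. \<forall>\<Omega> \<Psi>. (\<forall>i<M1. \<Omega> i \<in> probvec) \<longrightarrow> (\<forall>j<M2. \<Psi> j \<in> probvec) \<longrightarrow>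
      Gm m \<alpha> \<beta> \<Omega> \<Psi> \<le> v \<longrightarrow> ereal c \<le> Eexp M1 M2 \<alpha> \<beta> P Q \<Omega> \<Psi>"
proof -
  obtain \<delta> where d: "\<delta> > 0" and D: "\<And>\<Omega> \<Psi>. (\<forall>i<M1. \<forall>a. 0 \<le> \<Omega> i a) \<Longrightarrow> (\<forall>j<M2. \<forall>a. 0 \<le> \<Psi> j a) \<Longrightarrow>
      (\<forall>i<M1. \<forall>a. \<bar>\<Omega> i a - pmf (P i) a\<bar> < \<delta>) \<Longrightarrow> (\<forall>j<M2. \<forall>a. \<bar>\<Psi> j a - pmf (Q j) a\<bar> < \<delta>) \<Longrightarrow>
      v < Gm m \<alpha> \<beta> \<Omega> \<Psi>"
    using cont_delta[OF a b m _ _ v] by auto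
  define \<eta> where "\<eta> = (\<delta> / 4)^2"
  have e0: "\<eta> > 0" using d by (simp add: \<eta>_def)
  have se: "2 * sqrt \<eta> < \<delta>" using d by (simp add: \<eta>_def)
  define c where "c = min \<alpha> \<beta> * \<eta>"
  have c0: "c > 0" using a b e0 by (simp add: c_def)
  show ?thesis
  proof (intro exI[of _ c] conjI c0 allI impI)
    fix \<Omega> \<Psi> :: "nat \<Rightarrow> 'a \<Rightarrow> real"
    assume O: "\<forall>i<M1. \<Omega> i \<in> probvec" and Ps: "\<forall>j<M2. \<Psi> j \<in> probvec" and G: "Gm m \<alpha> \<beta> \<Omega> \<Psi> \<le> v"
    have nO: "\<forall>i<M1. \<forall>a. 0 \<le> \<Omega> i a" using O by (auto simp: probvec_def)
    have nP: "\<forall>j<M2. \<forall>a. 0 \<le> \<Psi> j a" using Ps by (auto simp: probvec_def)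
    have "\<not> ((\<forall>i<M1. \<forall>a. \<bar>\<Omega> i a - pmf (P i) a\<bar> < \<delta>) \<and> (\<forall>j<M2. \<forall>a. \<bar>\<Psi> j a - pmf (Q j) a\<bar> < \<delta>))"
      using D[OF nO nP] G by auto
    then show "ereal c \<le> Eexp M1 M2 \<alpha> \<beta> P Q \<Omega> \<Psi>"
    proof (elim disjE[OF de_Morgan_conj[THEN iffD1]])
      assume "\<not> (\<forall>i<M1. \<forall>a. \<bar>\<Omega> i a - pmf (P i) a\<bar> < \<delta>)"
      then obtain i a where i: "i < M1" and ia: "\<bar>\<Omega> i a - pmf (P i) a\<bar> \<ge> \<delta>" by (auto simp: not_less)
      have "\<not> kl (\<Omega> i) (pmf (P i)) < ereal \<eta>"
        using kl_close[of "\<Omega> i" "P i" \<eta> a] O i ia se by auto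
      then have k: "ereal \<eta> \<le> kl (\<Omega> i) (pmf (P i))" by (simp add: not_less)
      have "ereal c \<le> ereal \<alpha> * ereal \<eta>" using a b e0 by (simp add: c_def mult_right_mono)
      also have "\<dots> \<le> ereal \<alpha> * kl (\<Omega> i) (pmf (P i))"
        by (rule ereal_mult_left_mono[OF k]) (use a in simp)
      also have "\<dots> \<le> Eexp M1 M2 \<alpha> \<beta> P Q \<Omega> \<Psi>" by (rule Eexp_geX[OF O Ps a b i])
      finally show ?thesis .
    next
      assume "\<not> (\<forall>j<M2. \<forall>a. \<bar>\<Psi> j a - pmf (Q j) a\<bar> < \<delta>)"
      then obtain j a where j: "j < M2" and ja: "\<bar>\<Psi> j a - pmf (Q j) a\<bar> \<ge> \<delta>" by (auto simp: not_less)
      have "\<not> kl (\<Psi> j) (pmf (Q j)) < ereal \<eta>"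
        using kl_close[of "\<Psi> j" "Q j" \<eta> a] Ps j ja se by auto
      then have k: "ereal \<eta> \<le> kl (\<Psi> j) (pmf (Q j))" by (simp add: not_less)
      have "ereal c \<le> ereal \<beta> * ereal \<eta>" using a b e0 by (simp add: c_def mult_right_mono)
      also have "\<dots> \<le> ereal \<beta> * kl (\<Psi> j) (pmf (Q j))"
        by (rule ereal_mult_left_mono[OF k]) (use b in simp)
      also have "\<dots> \<le> Eexp M1 M2 \<alpha> \<beta> P Q \<Omega> \<Psi>" by (rule Eexp_geY[OF O Ps a b j])
      finally show ?thesis .
    qed
  qed
qed

lemma mixR_probvec:
  assumes "p \<in> probvec" "q \<in> probvec" "\<alpha> > 0" "\<beta> > 0"
  shows "mixR \<alpha> \<beta> p (q :: 'a::finite \<Rightarrow> real) \<in> probvec"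
proof -
  have "sum (mixR \<alpha> \<beta> p q) UNIV = (\<alpha> * sum p UNIV + \<beta> * sum q UNIV) / (\<alpha> + \<beta>)"
    unfolding mixR_def sum_divide_distrib[symmetric] by (simp add: sum.distrib sum_distrib_left)
  then show ?thesis using assms unfolding probvec_def mixR_def by auto
qed

lemma mixR_zero:
  assumes "p \<in> probvec" "q \<in> probvec" "\<alpha> > 0" "\<beta> > 0" "mixR \<alpha> \<beta> p q a = 0"
  shows "p a = 0" "q a = 0"
proof -
  have "p a \<ge> 0" "q a \<ge> 0" using assms by (auto simp: probvec_def)
  moreover have "\<alpha> * p a + \<beta> * q a = 0" using assms(3,4,5) by (simp add: mixR_def)
  ultimately show "p a = 0" "q a = 0" using assms(3,4)
    by (smt (verit) mult_nonneg_nonneg mult_pos_pos)+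
qed

lemma GJS_nonneg:
  assumes "p \<in> probvec" "q \<in> probvec" "\<alpha> > 0" "\<beta> > 0"
  shows "0 \<le> GJS p (q :: 'a::finite \<Rightarrow> real) \<alpha> \<beta>"
proof -
  have R: "mixR \<alpha> \<beta> p q \<in> probvec" by (rule mixR_probvec[OF assms])
  have R0: "\<And>a. 0 \<le> mixR \<alpha> \<beta> p q a" and R1: "sum (mixR \<alpha> \<beta> p q) UNIV \<le> 1" using R by (auto simp: probvec_def)
  have "0 \<le> klr p (mixR \<alpha> \<beta> p q)" by (rule gibbs[OF assms(1) R0 R1]) (use mixR_zero[OF assms] in blast)
  moreover have "0 \<le> klr q (mixR \<alpha> \<beta> p q)" by (rule gibbs[OF assms(2) R0 R1]) (use mixR_zero[OF assms] in blast)
  ultimately show ?thesis unfolding GJS_def using assms by simp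
qed

lemma diff_term:
  fixes x r R :: real
  assumes "x \<ge> 0" "r > 0" "R > 0"
  shows "(if x = 0 then 0 else x * ln (x / r)) - (if x = 0 then 0 else x * ln (x / R)) = x * (ln R - ln r)"
proof (cases "x = 0")
  case False
  then have "x > 0" using assms by simp
  then show ?thesis using assms False by (simp add: ln_div algebra_simps)
qed simp

lemma GJS_le_kl_real:
  fixes p q r :: "'a::finite \<Rightarrow> real"
  assumes p: "p \<in> probvec" and q: "q \<in> probvec" and r: "r \<in> probvec" and a: "\<alpha> > 0" and b: "\<beta> > 0"
    and acp: "\<And>x. r x = 0 \<Longrightarrow> p x = 0" and acq: "\<And>x. r x = 0 \<Longrightarrow> q x = 0"
  shows "GJS p q \<alpha> \<beta> \<le> \<alpha> * klr p r + \<beta> * klr q r"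
proof -
  let ?R = "mixR \<alpha> \<beta> p q"
  have Rp: "?R \<in> probvec" by (rule mixR_probvec[OF p q a b])
  have p0: "\<And>x. p x \<ge> 0" and q0: "\<And>x. q x \<ge> 0" and r0: "\<And>x. r x \<ge> 0" using p q r by (auto simp: probvec_def)
  have per: "\<alpha> * (if p x = 0 then 0 else p x * ln (p x / r x)) + \<beta> * (if q x = 0 then 0 else q x * ln (q x / r x))
      - (\<alpha> * (if p x = 0 then 0 else p x * ln (p x / ?R x)) + \<beta> * (if q x = 0 then 0 else q x * ln (q x / ?R x)))
      = (\<alpha> + \<beta>) * (if ?R x = 0 then 0 else ?R x * ln (?R x / r x))" for x
  proof (cases "?R x = 0")
    case True
    then have "p x = 0" "q x = 0" using mixR_zero[OF p q a b] by auto
    then show ?thesis using True by simp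
  next
    case False
    then have Rx: "?R x > 0" using Rp by (auto simp: probvec_def less_le)
    have "p x \<noteq> 0 \<or> q x \<noteq> 0" using False by (auto simp: mixR_def)
    then have "r x \<noteq> 0" using acp acq by blast
    then have rx: "r x > 0" using r0[of x] by simp
    have "\<alpha> * (if p x = 0 then 0 else p x * ln (p x / r x)) + \<beta> * (if q x = 0 then 0 else q x * ln (q x / r x))
      - (\<alpha> * (if p x = 0 then 0 else p x * ln (p x / ?R x)) + \<beta> * (if q x = 0 then 0 else q x * ln (q x / ?R x)))
      = \<alpha> * ((if p x = 0 then 0 else p x * ln (p x / r x)) - (if p x = 0 then 0 else p x * ln (p x / ?R x)))
        + \<beta> * ((if q x = 0 then 0 else q x * ln (q x / r x)) - (if q x = 0 then 0 else q x * ln (q x / ?R x)))"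
      by (simp add: algebra_simps)
    also have "\<dots> = (\<alpha> * p x + \<beta> * q x) * (ln (?R x) - ln (r x))"
      unfolding diff_term[OF p0 rx Rx] diff_term[OF q0 rx Rx] by (simp add: algebra_simps)
    also have "\<alpha> * p x + \<beta> * q x = (\<alpha> + \<beta>) * ?R x" using a b by (simp add: mixR_def)
    also have "(\<alpha> + \<beta>) * ?R x * (ln (?R x) - ln (r x)) = (\<alpha> + \<beta>) * (if ?R x = 0 then 0 else ?R x * ln (?R x / r x))"
      using False Rx rx by (simp add: ln_div)
    finally show ?thesis .
  qed
  have "\<alpha> * klr p r + \<beta> * klr q r - GJS p q \<alpha> \<beta> =
     (\<Sum>x\<in>UNIV. \<alpha> * (if p x = 0 then 0 else p x * ln (p x / r x)) + \<beta> * (if q x = 0 then 0 else q x * ln (q x / r x))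
      - (\<alpha> * (if p x = 0 then 0 else p x * ln (p x / ?R x)) + \<beta> * (if q x = 0 then 0 else q x * ln (q x / ?R x))))"
    unfolding GJS_def klr_def by (simp only: sum_subtractf sum.distrib sum_distrib_left)
  also have "\<dots> = (\<Sum>x\<in>UNIV. (\<alpha> + \<beta>) * (if ?R x = 0 then 0 else ?R x * ln (?R x / r x)))"
    unfolding per ..
  also have "\<dots> = (\<alpha> + \<beta>) * klr ?R r" unfolding klr_def by (simp only: sum_distrib_left)
  finally have "\<alpha> * klr p r + \<beta> * klr q r - GJS p q \<alpha> \<beta> = (\<alpha> + \<beta>) * klr ?R r" .
  moreover have "0 \<le> klr ?R r"
  proof (rule gibbs[OF Rp r0])
    show "sum r UNIV \<le> 1" using r by (simp add: probvec_def)
    fix x assume "r x = 0" then show "?R x = 0" using acp acq by (simp add: mixR_def)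
  qed
  ultimately show ?thesis using a b by (smt (verit) mult_nonneg_nonneg)
qed

lemma GJS_le_kl:
  fixes p q :: "'a::finite \<Rightarrow> real"
  assumes p: "p \<in> probvec" and q: "q \<in> probvec" and a: "\<alpha> > 0" and b: "\<beta> > 0"
  shows "ereal (GJS p q \<alpha> \<beta>) \<le> ereal \<alpha> * kl p (pmf P) + ereal \<beta> * kl q (pmf P)"
proof (cases "(\<forall>x. pmf P x = 0 \<longrightarrow> p x = 0) \<and> (\<forall>x. pmf P x = 0 \<longrightarrow> q x = 0)")
  case True
  then have "kl p (pmf P) = ereal (klr p (pmf P))" "kl q (pmf P) = ereal (klr q (pmf P))"
    unfolding kl_def by auto
  moreover have "GJS p q \<alpha> \<beta> \<le> \<alpha> * klr p (pmf P) + \<beta> * klr q (pmf P)"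
    using True by (intro GJS_le_kl_real[OF p q pmf_probvec a b]) auto
  ultimately show ?thesis by simp
next
  case False
  have k1: "0 \<le> ereal \<alpha> * kl p (pmf P)" by (rule akl_nonneg[OF a p])
  have k2: "0 \<le> ereal \<beta> * kl q (pmf P)" by (rule akl_nonneg[OF b q])
  have S: "ereal \<alpha> * kl p (pmf P) + ereal \<beta> * kl q (pmf P) = \<infinity>"
  proof (cases "kl p (pmf P) = \<infinity>")
    case True
    then have "ereal \<alpha> * kl p (pmf P) = \<infinity>" using a by simp
    then show ?thesis using k2 by simp
  next
    case F2: False
    then have "kl q (pmf P) = \<infinity>" using False unfolding kl_def by (auto split: if_splits)
    then have "ereal \<beta> * kl q (pmf P) = \<infinity>" using b by simp
    then show ?thesis using k1 by simp
  qed
  show ?thesis unfolding S by simp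
qed


lemma is_match_finite: "is_match M1 M2 m \<Longrightarrow> finite m"
  using finite_subset[of m "{..<M1} \<times> {..<M2}"] unfolding is_match_def by auto

lemma is_match_iff: "is_match M1 M2 m \<longleftrightarrow> m \<subseteq> {..<M1} \<times> {..<M2} \<and>
   (\<forall>i j i' j'. (i,j) \<in> m \<longrightarrow> (i',j') \<in> m \<longrightarrow> (i = i') = (j = j'))"
  unfolding is_match_def Ball_def split_paired_All by simp

lemma is_matchD: "is_match M1 M2 m \<Longrightarrow> (i,j) \<in> m \<Longrightarrow> (i',j') \<in> m \<Longrightarrow> (i = i') = (j = j')"
  unfolding is_match_iff by (elim conjE allE impE)

lemma is_match_sub: "is_match M1 M2 m \<Longrightarrow> m \<subseteq> {..<M1} \<times> {..<M2}"
  unfolding is_match_iff by (elim conjE)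

lemma is_match_subset:
  assumes a: "is_match M1 M2 m" "m0 \<subseteq> m"
  shows "is_match M1 M2 m0"
  unfolding is_match_iff
proof (intro conjI allI impI)
  show "m0 \<subseteq> {..<M1} \<times> {..<M2}" using a is_match_sub by blast
  fix i j i' j' assume "(i,j) \<in> m0" "(i',j') \<in> m0"
  then show "(i = i') = (j = j')" using is_matchD[OF a(1)] a(2) by blast
qed

lemma is_match_inj_fst: "is_match M1 M2 m \<Longrightarrow> inj_on fst m"
proof (rule inj_onI)
  fix z z' assume m: "is_match M1 M2 m" and z: "z \<in> m" "z' \<in> m" "fst z = fst z'"
  obtain i j i' j' where zz: "z = (i,j)" "z' = (i',j')" by fastforce
  show "z = z'" using is_matchD[OF m, of i j i' j'] z zz by simp
qed

lemma is_match_inj_snd: "is_match M1 M2 m \<Longrightarrow> inj_on snd m"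
proof (rule inj_onI)
  fix z z' assume m: "is_match M1 M2 m" and z: "z \<in> m" "z' \<in> m" "snd z = snd z'"
  obtain i j i' j' where zz: "z = (i,j)" "z' = (i',j')" by fastforce
  show "z = z'" using is_matchD[OF m, of i j i' j'] z zz by simp
qed

lemma Midx_match: "m \<in> Midx M1 M2 \<Longrightarrow> is_match M1 M2 m"
  unfolding Midx_def by auto

lemma Midx_card: "m \<in> Midx M1 M2 \<Longrightarrow> card m \<ge> 1"
  unfolding Midx_def by auto

lemma matches_iff: "m \<in> matches M1 M2 K \<longleftrightarrow> is_match M1 M2 m \<and> card m = K"
  unfolding matches_def by auto

lemma Midx_matches: "m \<in> Midx M1 M2 \<Longrightarrow> m \<in> matches M1 M2 (card m)"
  unfolding Midx_def matches_def by auto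

lemma finite_Midx: "finite (Midx M1 M2)"
proof -
  have "Midx M1 M2 \<subseteq> Pow ({..<M1} \<times> {..<M2})" unfolding Midx_def is_match_def by auto
  then show ?thesis by (rule finite_subset) auto
qed

lemma finite_matches: "finite (matches M1 M2 K)"
proof -
  have "matches M1 M2 K \<subseteq> Pow ({..<M1} \<times> {..<M2})" unfolding matches_def is_match_def by auto
  then show ?thesis by (rule finite_subset) auto
qed

lemma subset_card_ne:
  assumes B: "finite B" and h1: "1 \<le> h" and hB: "h < card B"
  shows "\<exists>A \<subseteq> B. card A = h \<and> A \<noteq> C"
proof -
  obtain A where A: "A \<subseteq> B" "card A = h" "finite A"
    using obtain_subset_with_card_n[of h B] hB by auto
  show ?thesis
  proof (cases "A = C")
    case False then show ?thesis using A by blast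
  next
    case True
    have "A \<noteq> B" using A hB by auto
    then obtain x where x: "x \<in> B" "x \<notin> A" using A by blast
    have "A \<noteq> {}" using A h1 by auto
    then obtain y where y: "y \<in> A" by blast
    let ?A = "insert x (A - {y})"
    have "?A \<subseteq> B" using A x y by auto
    moreover have "card ?A = h" using A x y h1 by (simp add: card_Diff_singleton)
    moreover have "?A \<noteq> C" using True x by auto
    ultimately show ?thesis by blast
  qed
qed

lemma Gm_nonneg:
  assumes "m \<subseteq> {..<M1} \<times> {..<M2}" "\<forall>i<M1. \<Omega> i \<in> probvec" "\<forall>j<M2. \<Psi> j \<in> probvec" "\<alpha> > 0" "\<beta> > 0"
  shows "0 \<le> Gm m \<alpha> \<beta> \<Omega> (\<Psi> :: nat \<Rightarrow> 'a::finite \<Rightarrow> real)"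
  unfolding Gm_def using assms by (intro sum_nonneg) (auto intro!: GJS_nonneg)

lemma Gm_mono:
  assumes "m0 \<subseteq> m" "finite m" "m \<subseteq> {..<M1} \<times> {..<M2}" "\<forall>i<M1. \<Omega> i \<in> probvec" "\<forall>j<M2. \<Psi> j \<in> probvec" "\<alpha> > 0" "\<beta> > 0"
  shows "Gm m0 \<alpha> \<beta> \<Omega> \<Psi> \<le> Gm m \<alpha> \<beta> \<Omega> (\<Psi> :: nat \<Rightarrow> 'a::finite \<Rightarrow> real)"
  unfolding Gm_def using assms by (intro sum_mono2) (auto intro!: GJS_nonneg)

lemma GJS_same: "GJS p p \<alpha> \<beta> = 0" if "\<alpha> > 0" "\<beta> > 0"
proof -
  have "mixR \<alpha> \<beta> p p = p" using that by (auto simp: mixR_def field_simps)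
  moreover have "klr p p = 0" unfolding klr_def by (rule sum.neutral) auto
  ultimately show ?thesis by (simp add: GJS_def)
qed

lemma Eexp_ge_Gm:
  fixes P Q :: "nat \<Rightarrow> 'a::finite pmf"
  assumes m: "is_match M1 M2 m" and tr: "\<forall>(i,j)\<in>m. P i = Q j"
    and O: "\<forall>i<M1. \<Omega> i \<in> probvec" and Ps: "\<forall>j<M2. \<Psi> j \<in> probvec" and a: "\<alpha> > 0" and b: "\<beta> > 0"
  shows "ereal (Gm m \<alpha> \<beta> \<Omega> \<Psi>) \<le> Eexp M1 M2 \<alpha> \<beta> P Q \<Omega> \<Psi>"
proof -
  have fm: "finite m" by (rule is_match_finite[OF m])
  have sub: "m \<subseteq> {..<M1} \<times> {..<M2}" by (rule is_match_sub[OF m])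
  define fX where "fX i = ereal \<alpha> * kl (\<Omega> i) (pmf (P i))" for i
  define fY where "fY j = ereal \<beta> * kl (\<Psi> j) (pmf (Q j))" for j
  have "ereal (Gm m \<alpha> \<beta> \<Omega> \<Psi>) = (\<Sum>z\<in>m. ereal (GJS (\<Omega> (fst z)) (\<Psi> (snd z)) \<alpha> \<beta>))"
    unfolding Gm_def by (simp add: case_prod_beta)
  also have "\<dots> \<le> (\<Sum>z\<in>m. fX (fst z) + fY (snd z))"
  proof (rule sum_mono)
    fix z assume z: "z \<in> m"
    then have zr: "fst z < M1" "snd z < M2" using sub by auto
    have eq: "Q (snd z) = P (fst z)" using tr z by (auto simp: case_prod_beta)
    show "ereal (GJS (\<Omega> (fst z)) (\<Psi> (snd z)) \<alpha> \<beta>) \<le> fX (fst z) + fY (snd z)"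
      unfolding fX_def fY_def eq using O Ps zr by (intro GJS_le_kl a b) auto
  qed
  also have "\<dots> = (\<Sum>z\<in>m. fX (fst z)) + (\<Sum>z\<in>m. fY (snd z))" by (rule sum.distrib)
  also have "(\<Sum>z\<in>m. fX (fst z)) = (\<Sum>i\<in>fst ` m. fX i)"
    using sum.reindex[OF is_match_inj_fst[OF m], of fX] by (simp add: comp_def)
  also have "(\<Sum>z\<in>m. fY (snd z)) = (\<Sum>j\<in>snd ` m. fY j)"
    using sum.reindex[OF is_match_inj_snd[OF m], of fY] by (simp add: comp_def)
  also have "(\<Sum>i\<in>fst ` m. fX i) \<le> (\<Sum>i<M1. fX i)"
    using sub O a by (intro sum_mono2) (auto simp: fX_def intro!: akl_nonneg)
  also have "(\<Sum>j\<in>snd ` m. fY j) \<le> (\<Sum>j<M2. fY j)"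
    using sub Ps b by (intro sum_mono2) (auto simp: fY_def intro!: akl_nonneg)
  finally show ?thesis unfolding Eexp_def fX_def fY_def by (simp add: add_mono)
qed


lemma tau_enatD:
  assumes "tau M1 M2 \<alpha> \<beta> l1 l2 l3 N \<omega> = enat n"
  shows "N - 1 \<le> n" "stops M1 M2 \<alpha> \<beta> l1 l2 l3 n \<omega>"
    "\<And>k. N - 1 \<le> k \<Longrightarrow> k < n \<Longrightarrow> \<not> stops M1 M2 \<alpha> \<beta> l1 l2 l3 k \<omega>"
proof -
  let ?P = "\<lambda>n. N - 1 \<le> n \<and> stops M1 M2 \<alpha> \<beta> l1 l2 l3 n \<omega>"
  have ex: "\<exists>n. ?P n" using assms unfolding tau_def by (auto split: if_splits)
  then have n: "n = (LEAST n. ?P n)" using assms unfolding tau_def by auto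
  have "?P n" unfolding n by (rule LeastI_ex[OF ex])
  then show "N - 1 \<le> n" "stops M1 M2 \<alpha> \<beta> l1 l2 l3 n \<omega>" by auto
  fix k assume "N - 1 \<le> k" "k < n"
  then show "\<not> stops M1 M2 \<alpha> \<beta> l1 l2 l3 k \<omega>" using not_less_Least[of k ?P] n by auto
qed

lemma tau_infD:
  assumes "tau M1 M2 \<alpha> \<beta> l1 l2 l3 N \<omega> = \<infinity>" "N - 1 \<le> k"
  shows "\<not> stops M1 M2 \<alpha> \<beta> l1 l2 l3 k \<omega>"
  using assms unfolding tau_def by (auto split: if_splits)

lemma evD_unique:
  assumes "m \<in> Midx M1 M2" "m' \<in> Midx M1 M2" "evD M1 M2 \<alpha> \<beta> l2 l3 m n \<omega>" "evD M1 M2 \<alpha> \<beta> l2 l3 m' n \<omega>"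
  shows "m = m'"
  using assms unfolding evD_def by blast

lemma decision_SomeD:
  assumes "decision M1 M2 \<alpha> \<beta> l1 l2 l3 N \<omega> = Some m'"
  shows "\<exists>n. tau M1 M2 \<alpha> \<beta> l1 l2 l3 N \<omega> = enat n \<and> m' \<in> Midx M1 M2 \<and> evD M1 M2 \<alpha> \<beta> l2 l3 m' n \<omega>"
proof (cases "tau M1 M2 \<alpha> \<beta> l1 l2 l3 N \<omega>")
  case (enat n)
  with assms have ex: "\<exists>m\<in>Midx M1 M2. evD M1 M2 \<alpha> \<beta> l2 l3 m n \<omega>"
    and eq: "m' = (THE m. m \<in> Midx M1 M2 \<and> evD M1 M2 \<alpha> \<beta> l2 l3 m n \<omega>)"
    unfolding decision_def by (auto split: if_splits)
  from ex obtain m0 where m0: "m0 \<in> Midx M1 M2" "evD M1 M2 \<alpha> \<beta> l2 l3 m0 n \<omega>" by blast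
  have "m' = m0" unfolding eq
    by (rule the_equality) (use m0 evD_unique in blast)+
  then show ?thesis using enat m0 by auto
next
  case infinity
  then show ?thesis using assms unfolding decision_def by simp
qed

lemma decision_NoneD:
  assumes "tau M1 M2 \<alpha> \<beta> l1 l2 l3 N \<omega> = enat n" "decision M1 M2 \<alpha> \<beta> l1 l2 l3 N \<omega> = None"
  shows "evA M1 M2 \<alpha> \<beta> l1 n \<omega>"
proof -
  have "\<not> (\<exists>m\<in>Midx M1 M2. evD M1 M2 \<alpha> \<beta> l2 l3 m n \<omega>)"
    using assms unfolding decision_def by (auto split: if_splits)
  moreover have "stops M1 M2 \<alpha> \<beta> l1 l2 l3 n \<omega>" by (rule tau_enatD(2)[OF assms(1)])
  ultimately show ?thesis unfolding stops_def by blast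
qed

lemma Sstat_eq: "Sstat \<alpha> \<beta> m n \<omega> = Gm m \<alpha> \<beta> (tX (ssize \<alpha> n) \<omega>) (tY (ssize \<beta> n) \<omega>)"
  unfolding Sstat_def tX_def tY_def ..

lemma types_probvec:
  assumes "\<alpha> > 0" "\<beta> > 0" "n \<ge> 1"
  shows "\<forall>i<M1. tX (ssize \<alpha> n) \<omega> i \<in> probvec" "\<forall>j<M2. tY (ssize \<beta> n) \<omega> j \<in> probvec"
  using emp_probvec[OF ssize_pos[OF assms(1,3)]] emp_probvec[OF ssize_pos[OF assms(2,3)]]
  by (auto simp: tX_def tY_def)

lemma Gm_loc:
  assumes "m \<subseteq> {..<M1} \<times> {..<M2}" "\<forall>i<M1. X i = X' i" "\<forall>j<M2. Y j = Y' j"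
  shows "Gm m \<alpha> \<beta> X Y = Gm m \<alpha> \<beta> X' Y'"
  unfolding Gm_def by (rule sum.cong) (use assms in auto)


lemma ev_tail:
  fixes P Q :: "nat \<Rightarrow> 'a::finite pmf"
  assumes L: "loc M1 M2 \<Phi>" and a: "\<alpha> > 0" and b: "\<beta> > 0" and c': "0 \<le> c'" "c' < c"
    and H: "\<And>\<Omega> \<Psi>. (\<forall>i<M1. \<Omega> i \<in> probvec) \<Longrightarrow> (\<forall>j<M2. \<Psi> j \<in> probvec) \<Longrightarrow> \<Phi> \<Omega> \<Psi> \<Longrightarrow>
      ereal c \<le> Eexp M1 M2 \<alpha> \<beta> P Q \<Omega> \<Psi>"
  shows "eventually (\<lambda>N. (\<Sum>n. emeasure (obs_space P Q) (if N - 1 \<le> n then {\<omega>. \<Phi> (tX (ssize \<alpha> n) \<omega>) (tY (ssize \<beta> n) \<omega>)} else {}))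
     \<le> ennreal (exp (- (real N * c')))) sequentially"
proof (rule tail_bound[OF _ _ a b c', where A = "CARD('a) * M1" and B = "CARD('a) * M2"])
  fix n show "{\<omega>. \<Phi> (tX (ssize \<alpha> n) \<omega>) (tY (ssize \<beta> n) \<omega>)} \<in> sets (obs_space P Q)"
    by (rule ev_sets[OF L])
next
  fix n :: nat assume n: "n \<ge> 1"
  show "emeasure (obs_space P Q) {\<omega>. \<Phi> (tX (ssize \<alpha> n) \<omega>) (tY (ssize \<beta> n) \<omega>)}
      \<le> ennreal (real ((ssize \<alpha> n + 1) ^ (CARD('a) * M1) * (ssize \<beta> n + 1) ^ (CARD('a) * M2)) * exp (- (real n * c)))"
  proof (rule sanov[OF L ssize_pos[OF a n] ssize_pos[OF b n]])
    show "0 \<le> exp (- (real n * c))" by simp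
    fix x :: "'a sample" assume "\<Phi> (tX (ssize \<alpha> n) x) (tY (ssize \<beta> n) x)"
    then have "ereal c \<le> Eexp M1 M2 \<alpha> \<beta> P Q (tX (ssize \<alpha> n) x) (tY (ssize \<beta> n) x)"
      using H types_probvec[OF a b n] by blast
    then show "(\<Prod>k\<in>Jset M1 M2 (ssize \<alpha> n) (ssize \<beta> n). pmf (Dk P Q k) (x k))
        \<le> (\<Prod>k\<in>Jset M1 M2 (ssize \<alpha> n) (ssize \<beta> n). Tf (tX (ssize \<alpha> n) x) (tY (ssize \<beta> n) x) k (x k)) * exp (- (real n * c))"
      by (rule kl_bound[OF a b n refl refl])
  qed
qed

lemma neglog_nonneg: "0 \<le> p \<Longrightarrow> p \<le> 1 \<Longrightarrow> 0 \<le> neglog p"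
  unfolding neglog_def by auto

lemma liminf_from:
  fixes p :: "nat \<Rightarrow> real" and L :: ereal
  assumes p0: "\<And>N. 0 \<le> p N" and p1: "\<And>N. p N \<le> 1"
    and H: "\<And>c. 0 < c \<Longrightarrow> ereal c < L \<Longrightarrow> eventually (\<lambda>N. p N \<le> exp (- (real N * c))) sequentially"
  shows "L \<le> liminf (\<lambda>N. neglog (p N) / ereal (real N))"
proof (rule dense_le)
  fix y assume y: "y < L"
  have pos: "eventually (\<lambda>N. 0 \<le> neglog (p N) / ereal (real N)) sequentially"
  proof (rule eventually_mono[OF eventually_ge_at_top[of 1]])
    fix N :: nat assume N: "N \<ge> 1"
    have "0 \<le> neglog (p N)" by (rule neglog_nonneg[OF p0 p1])
    then show "0 \<le> neglog (p N) / ereal (real N)" using N by (cases "neglog (p N)") auto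
  qed
  show "y \<le> liminf (\<lambda>N. neglog (p N) / ereal (real N))"
  proof (cases "y \<le> 0")
    case True
    have "0 \<le> liminf (\<lambda>N. neglog (p N) / ereal (real N))" by (rule Liminf_bounded[OF pos])
    then show ?thesis using True by simp
  next
    case False
    then have "y \<noteq> \<infinity>" "y \<noteq> -\<infinity>" using y by auto
    then obtain c where yc: "y = ereal c" by (cases y) auto
    have c0: "c > 0" using False yc by simp
    have ev: "eventually (\<lambda>N. p N \<le> exp (- (real N * c))) sequentially" by (rule H[OF c0]) (use y yc in simp)
    have "eventually (\<lambda>N. ereal c \<le> neglog (p N) / ereal (real N)) sequentially"
      using ev eventually_ge_at_top[of 1]
    proof eventually_elim
      case (elim N)
      then have Npos: "real N > 0" by simp
      show ?case
      proof (cases "p N = 0")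
        case True then show ?thesis using Npos by (simp add: neglog_def)
      next
        case F: False
        then have pN: "p N > 0" using p0[of N] by linarith
        have "ln (p N) \<le> ln (exp (- (real N * c)))" using elim(1) pN by (subst ln_le_cancel_iff) auto
        then have "real N * c \<le> - ln (p N)" by simp
        then have "c \<le> - ln (p N) / real N" using Npos by (simp add: field_simps)
        then show ?thesis using F Npos by (simp add: neglog_def)
      qed
    qed
    then show ?thesis unfolding yc by (rule Liminf_bounded)
  qed
qed

lemma measure_le_union:
  fixes M :: "'x measure"
  assumes E: "E \<subseteq> (\<Union>n. G n)" and G: "\<And>n. G n \<in> sets M" and S: "(\<Sum>n. emeasure M (G n)) \<le> ennreal r" and r: "0 \<le> r"
  shows "measure M E \<le> r"
proof -
  have "emeasure M E \<le> emeasure M (\<Union>n. G n)" by (rule emeasure_mono[OF E]) (use G in auto)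
  also have "\<dots> \<le> (\<Sum>n. emeasure M (G n))" by (rule emeasure_subadditive_countably) (use G in auto)
  also have "\<dots> \<le> ennreal r" by (rule S)
  finally show ?thesis unfolding measure_def by (rule enn2real_leI[OF r])
qed

lemma ennreal_all_nat_top: "(\<And>K. of_nat K \<le> (x::ennreal)) \<Longrightarrow> x = \<infinity>"
proof -
  assume "\<And>K. of_nat K \<le> (x::ennreal)"
  then have "(SUP K. of_nat K :: ennreal) \<le> x" by (rule SUP_least)
  then show ?thesis unfolding ennreal_SUP_of_nat_eq_top by (simp add: top_unique)
qed

lemma tau_pointwise:
  fixes G :: "nat \<Rightarrow> 'a::finite sample set"
  assumes cov: "\<And>n. N - 1 \<le> n \<Longrightarrow> \<not> stops M1 M2 \<alpha> \<beta> l1 l2 l3 n \<omega> \<Longrightarrow> \<omega> \<in> G n"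
  shows "ennreal_of_enat (tau M1 M2 \<alpha> \<beta> l1 l2 l3 N \<omega>)
    \<le> of_nat (N - 1) + (\<Sum>n. indicator (if N - 1 \<le> n then G n else {}) \<omega>)"
proof (cases "tau M1 M2 \<alpha> \<beta> l1 l2 l3 N \<omega>")
  case (enat T)
  have T: "N - 1 \<le> T" by (rule tau_enatD(1)[OF enat])
  have "(\<Sum>n\<in>{N - 1..<T}. indicator (if N - 1 \<le> n then G n else {}) \<omega> :: ennreal) = (\<Sum>n\<in>{N - 1..<T}. 1)"
    by (rule sum.cong[OF refl]) (use tau_enatD(3)[OF enat] cov in auto)
  also have "\<dots> = of_nat (T - (N - 1))" by simp
  finally have eq: "(\<Sum>n\<in>{N - 1..<T}. indicator (if N - 1 \<le> n then G n else {}) \<omega> :: ennreal) = of_nat (T - (N - 1))" .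
  have "(\<Sum>n\<in>{N - 1..<T}. indicator (if N - 1 \<le> n then G n else {}) \<omega> :: ennreal)
      \<le> (\<Sum>n. indicator (if N - 1 \<le> n then G n else {}) \<omega>)"
    by (rule sum_le_suminf) auto
  then have B: "of_nat (T - (N - 1)) \<le> (\<Sum>n. indicator (if N - 1 \<le> n then G n else {}) \<omega> :: ennreal)"
    unfolding eq .
  have A: "of_nat (N - 1) + of_nat (T - (N - 1)) \<le> of_nat (N - 1) + (\<Sum>n. indicator (if N - 1 \<le> n then G n else {}) \<omega> :: ennreal)"
    by (rule add_left_mono[OF B])
  have E: "of_nat (N - 1) + of_nat (T - (N - 1)) = (of_nat T :: ennreal)"
    using T by (simp flip: of_nat_add)
  have TT: "ennreal_of_enat (tau M1 M2 \<alpha> \<beta> l1 l2 l3 N \<omega>) = of_nat T" using enat by simp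
  show ?thesis unfolding TT E[symmetric] by (rule A)
next
  case infinity
  have "(\<Sum>n. indicator (if N - 1 \<le> n then G n else {}) \<omega> :: ennreal) = \<infinity>"
  proof (rule ennreal_all_nat_top)
    fix K
    have "(\<Sum>n\<in>{N - 1..<N - 1 + K}. indicator (if N - 1 \<le> n then G n else {}) \<omega> :: ennreal) = (\<Sum>n\<in>{N - 1..<N - 1 + K}. 1)"
      by (rule sum.cong[OF refl]) (use tau_infD[OF infinity] cov in auto)
    also have "\<dots> = of_nat K" by simp
    finally have eq: "(\<Sum>n\<in>{N - 1..<N - 1 + K}. indicator (if N - 1 \<le> n then G n else {}) \<omega> :: ennreal) = of_nat K" .
    have "(\<Sum>n\<in>{N - 1..<N - 1 + K}. indicator (if N - 1 \<le> n then G n else {}) \<omega> :: ennreal)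
      \<le> (\<Sum>n. indicator (if N - 1 \<le> n then G n else {}) \<omega>)"
      by (rule sum_le_suminf) auto
    then show "of_nat K \<le> (\<Sum>n. indicator (if N - 1 \<le> n then G n else {}) \<omega> :: ennreal)" unfolding eq .
  qed
  then show ?thesis by simp
qed

lemma Etau_bound:
  fixes P Q :: "nat \<Rightarrow> 'a::finite pmf"
  assumes L: "loc M1 M2 \<Phi>" and a: "\<alpha> > 0" and b: "\<beta> > 0" and c: "c > 0"
    and H: "\<And>\<Omega> \<Psi>. (\<forall>i<M1. \<Omega> i \<in> probvec) \<Longrightarrow> (\<forall>j<M2. \<Psi> j \<in> probvec) \<Longrightarrow> \<Phi> \<Omega> \<Psi> \<Longrightarrow>
      ereal c \<le> Eexp M1 M2 \<alpha> \<beta> P Q \<Omega> \<Psi>"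
    and cov: "\<And>n \<omega>. n \<ge> 1 \<Longrightarrow> \<not> stops M1 M2 \<alpha> \<beta> l1 l2 l3 n \<omega> \<Longrightarrow> \<Phi> (tX (ssize \<alpha> n) \<omega>) (tY (ssize \<beta> n) \<omega>)"
  shows "eventually (\<lambda>N. (\<integral>\<^sup>+ \<omega>. ennreal_of_enat (tau M1 M2 \<alpha> \<beta> l1 l2 l3 N \<omega>) \<partial>obs_space P Q) \<le> ennreal (real N)) sequentially"
proof -
  define G where "G n = {\<omega>. \<Phi> (tX (ssize \<alpha> n) \<omega>) (tY (ssize \<beta> n) \<omega>)}" for n
  define G' where "G' N n = (if N - 1 \<le> n then G n else {})" for N n
  have Gs: "G' N n \<in> sets (obs_space P Q)" for N n unfolding G'_def G_def using ev_sets[OF L] by auto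
  interpret PS: prob_space "obs_space P Q" by (rule prob_space_obs)
  have ev: "eventually (\<lambda>N. (\<Sum>n. emeasure (obs_space P Q) (G' N n)) \<le> ennreal (exp (- (real N * 0)))) sequentially"
    unfolding G'_def G_def by (rule ev_tail[OF L a b _ c H]) auto
  show ?thesis
    using ev eventually_ge_at_top[of 2]
  proof eventually_elim
    case (elim N)
    have "(\<integral>\<^sup>+ \<omega>. ennreal_of_enat (tau M1 M2 \<alpha> \<beta> l1 l2 l3 N \<omega>) \<partial>obs_space P Q)
        \<le> (\<integral>\<^sup>+ \<omega>. of_nat (N - 1) + (\<Sum>n. indicator (G' N n) \<omega>) \<partial>obs_space P Q)"
    proof (rule nn_integral_mono)
      fix \<omega> :: "'a sample"
      have "\<And>n. N - 1 \<le> n \<Longrightarrow> \<not> stops M1 M2 \<alpha> \<beta> l1 l2 l3 n \<omega> \<Longrightarrow> \<omega> \<in> G n"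
        using cov elim(2) unfolding G_def by auto
      from tau_pointwise[of N M1 M2 \<alpha> \<beta> l1 l2 l3 \<omega> G, OF this]
      show "ennreal_of_enat (tau M1 M2 \<alpha> \<beta> l1 l2 l3 N \<omega>) \<le> of_nat (N - 1) + (\<Sum>n. indicator (G' N n) \<omega>)"
        unfolding G'_def by simp
    qed
    also have "\<dots> = (\<integral>\<^sup>+ \<omega>. of_nat (N - 1) \<partial>obs_space P Q) + (\<integral>\<^sup>+ \<omega>. (\<Sum>n. indicator (G' N n) \<omega>) \<partial>obs_space P Q)"
      by (rule nn_integral_add) (use Gs in auto)
    also have "(\<integral>\<^sup>+ \<omega>. (\<Sum>n. indicator (G' N n) \<omega>) \<partial>obs_space P Q) = (\<Sum>n. emeasure (obs_space P Q) (G' N n))"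
      using Gs by (subst nn_integral_suminf) auto
    also have "(\<integral>\<^sup>+ \<omega>. of_nat (N - 1) \<partial>obs_space P Q) = of_nat (N - 1)"
      using PS.emeasure_space_1 by simp
    also have "of_nat (N - 1) + (\<Sum>n. emeasure (obs_space P Q) (G' N n)) \<le> of_nat (N - 1) + ennreal 1"
      using elim(1) by (intro add_left_mono) simp
    also have "of_nat (N - 1) + ennreal 1 = ennreal (real N)"
    proof -
      have "of_nat (N - 1) + ennreal 1 = (of_nat (Suc (N - 1)) :: ennreal)" by (simp add: add.commute)
      also have "Suc (N - 1) = N" using elim(2) by simp
      also have "(of_nat N :: ennreal) = ennreal (real N)" by (simp add: ennreal_of_nat_eq_real_of_nat)
      finally show ?thesis .
    qed
    finally show ?case .
  qed
qed


lemma rate_bound: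
  fixes P Q :: "nat \<Rightarrow> 'a::finite pmf" and L :: ereal and E :: "nat \<Rightarrow> 'a sample set"
  assumes Lc: "loc M1 M2 \<Phi>" and a: "\<alpha> > 0" and b: "\<beta> > 0"
    and HL: "\<And>\<Omega> \<Psi>. (\<forall>i<M1. \<Omega> i \<in> probvec) \<Longrightarrow> (\<forall>j<M2. \<Psi> j \<in> probvec) \<Longrightarrow> \<Phi> \<Omega> \<Psi> \<Longrightarrow>
      L \<le> Eexp M1 M2 \<alpha> \<beta> P Q \<Omega> \<Psi>"
    and cover: "eventually (\<lambda>N. E N \<subseteq> (\<Union>n. if N - 1 \<le> n then {\<omega>. \<Phi> (tX (ssize \<alpha> n) \<omega>) (tY (ssize \<beta> n) \<omega>)} else {})) sequentially"
  shows "L \<le> liminf (\<lambda>N. neglog (measure (obs_space P Q) (E N)) / ereal (real N))"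
proof (rule liminf_from)
  interpret PS: prob_space "obs_space P Q" by (rule prob_space_obs)
  fix N show "0 \<le> measure (obs_space P Q) (E N)" by simp
  show "measure (obs_space P Q) (E N) \<le> 1" by (rule PS.prob_le_1)
next
  fix c :: real assume c0: "0 < c" and cL: "ereal c < L"
  obtain c2 where c2: "c < c2" "ereal c2 < L" using ereal_dense2[OF cL] by auto
  have H: "ereal c2 \<le> Eexp M1 M2 \<alpha> \<beta> P Q \<Omega> \<Psi>" if "\<forall>i<M1. \<Omega> i \<in> probvec" "\<forall>j<M2. \<Psi> j \<in> probvec" "\<Phi> \<Omega> \<Psi>" for \<Omega> \<Psi>
    using HL[OF that] c2(2) by simp
  have ev: "eventually (\<lambda>N. (\<Sum>n. emeasure (obs_space P Q) (if N - 1 \<le> n then {\<omega>. \<Phi> (tX (ssize \<alpha> n) \<omega>) (tY (ssize \<beta> n) \<omega>)} else {}))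
     \<le> ennreal (exp (- (real N * c)))) sequentially"
    by (rule ev_tail[OF Lc a b _ c2(1) H]) (use c0 in auto)
  show "eventually (\<lambda>N. measure (obs_space P Q) (E N) \<le> exp (- (real N * c))) sequentially"
    using ev cover
  proof eventually_elim
    case (elim N)
    show ?case by (rule measure_le_union[OF elim(2) _ elim(1)]) (auto intro: ev_sets[OF Lc])
  qed
qed

lemma inPm_true: "inPm M1 M2 m P Q \<Longrightarrow> is_match M1 M2 m \<Longrightarrow> \<forall>(i,j)\<in>m. P i = Q j"
  unfolding inPm_def using is_match_sub by fastforce

lemma Gm_true_split:
  fixes P Q :: "nat \<Rightarrow> 'a::finite pmf"
  assumes tr: "\<forall>(i,j)\<in>m. P i = Q j" and f: "finite m'" and a: "\<alpha> > 0" and b: "\<beta> > 0"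
  shows "Gm m' \<alpha> \<beta> (\<lambda>i. pmf (P i)) (\<lambda>j. pmf (Q j)) = (\<Sum>(i,j)\<in>m' - m. GJS (pmf (P i)) (pmf (Q j)) \<alpha> \<beta>)"
proof -
  have z: "(\<Sum>(i,j)\<in>m' \<inter> m. GJS (pmf (P i)) (pmf (Q j)) \<alpha> \<beta>) = 0"
  proof (rule sum.neutral, safe)
    fix i j assume "(i,j) \<in> m'" "(i,j) \<in> m"
    then have "P i = Q j" using tr by auto
    then show "GJS (pmf (P i)) (pmf (Q j)) \<alpha> \<beta> = 0" using GJS_same[OF a b] by simp
  qed
  show ?thesis unfolding Gm_def sum.Int_Diff[OF f, of _ m] z by simp
qed

lemma Lam_le:
  assumes "m' \<in> matches M1 M2 (card m)" "m' \<noteq> m"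
  shows "Lam M1 M2 \<alpha> \<beta> m P Q \<le> ereal (\<Sum>(i,j)\<in>m' - m. GJS (pmf (P i)) (pmf (Q j)) \<alpha> \<beta>)"
  unfolding Lam_def by (rule Inf_lower) (use assms in blast)

lemma Er_le:
  assumes "m \<in> Midx M1 M2" "feasible M1 M2 \<alpha> \<beta> lam m \<Omega> \<Psi>"
  shows "Er M1 M2 \<alpha> \<beta> lam P Q \<le> Eexp M1 M2 \<alpha> \<beta> P Q \<Omega> \<Psi>"
  unfolding Er_def by (rule Inf_lower) (use assms in blast)

lemma Gexp_le:
  assumes "m \<in> Midx M1 M2" "K < card m" "feasible M1 M2 \<alpha> \<beta> lam m \<Omega> \<Psi>"
  shows "Gexp M1 M2 \<alpha> \<beta> K lam P Q \<le> Eexp M1 M2 \<alpha> \<beta> P Q \<Omega> \<Psi>"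
  unfolding Gexp_def by (rule Inf_lower) (use assms in blast)

lemma Gm_single: "Gm {(i,j)} \<alpha> \<beta> X Y = GJS (X i) (Y j) \<alpha> \<beta>"
  unfolding Gm_def by simp


lemma tX_probvec: "\<alpha> > 0 \<Longrightarrow> n \<ge> 1 \<Longrightarrow> tX (ssize \<alpha> n) \<omega> i \<in> probvec"
  unfolding tX_def by (rule emp_probvec[OF ssize_pos])

lemma tY_probvec: "\<beta> > 0 \<Longrightarrow> n \<ge> 1 \<Longrightarrow> tY (ssize \<beta> n) \<omega> j \<in> probvec"
  unfolding tY_def by (rule emp_probvec[OF ssize_pos])

lemma G0_lt:
  assumes "l1 < G0 M1 M2 \<alpha> \<beta> P Q" "i < M1" "j < M2"
  shows "l1 < GJS (pmf (P i)) (pmf (Q j)) \<alpha> \<beta>"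
proof -
  let ?S = "{GJS (pmf (P i)) (pmf (Q j)) \<alpha> \<beta> | i j. i < M1 \<and> j < M2}"
  have "?S = (\<lambda>(i,j). GJS (pmf (P i)) (pmf (Q j)) \<alpha> \<beta>) ` ({..<M1} \<times> {..<M2})" by auto
  then have "finite ?S" by simp
  moreover have "GJS (pmf (P i)) (pmf (Q j)) \<alpha> \<beta> \<in> ?S" using assms by blast
  ultimately have "G0 M1 M2 \<alpha> \<beta> P Q \<le> GJS (pmf (P i)) (pmf (Q j)) \<alpha> \<beta>"
    unfolding G0_def by (rule Min_le)
  then show ?thesis using assms(1) by simp
qed

lemma part1_tau:
  fixes P Q :: "nat \<Rightarrow> 'a::finite pmf"
  assumes a: "\<alpha> > 0" and b: "\<beta> > 0" and M1: "M1 \<ge> 1" and M2: "M2 \<ge> 1"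
    and G0: "l1 < G0 M1 M2 \<alpha> \<beta> P Q"
  shows "eventually (\<lambda>N. (\<integral>\<^sup>+ \<omega>. ennreal_of_enat (tau M1 M2 \<alpha> \<beta> l1 l2 l3 N \<omega>) \<partial>obs_space P Q) \<le> ennreal (real N)) sequentially"
proof -
  define I where "I = {..<M1} \<times> {..<M2}"
  have "\<forall>z\<in>I. \<exists>c>0. \<forall>\<Omega> \<Psi>. (\<forall>i<M1. \<Omega> i \<in> probvec) \<longrightarrow> (\<forall>j<M2. \<Psi> j \<in> probvec) \<longrightarrow>
      Gm {z} \<alpha> \<beta> \<Omega> \<Psi> \<le> l1 \<longrightarrow> ereal c \<le> Eexp M1 M2 \<alpha> \<beta> P Q \<Omega> \<Psi>"
  proof
    fix z assume z: "z \<in> I"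
    obtain i j where ij: "z = (i,j)" "i < M1" "j < M2" using z unfolding I_def by auto
    show "\<exists>c>0. \<forall>\<Omega> \<Psi>. (\<forall>i<M1. \<Omega> i \<in> probvec) \<longrightarrow> (\<forall>j<M2. \<Psi> j \<in> probvec) \<longrightarrow>
      Gm {z} \<alpha> \<beta> \<Omega> \<Psi> \<le> l1 \<longrightarrow> ereal c \<le> Eexp M1 M2 \<alpha> \<beta> P Q \<Omega> \<Psi>"
      using ij G0_lt[OF G0 ij(2,3)] by (intro cont_gap[OF a b]) (auto simp: Gm_single)
  qed
  then obtain cf where cf: "\<And>z. z \<in> I \<Longrightarrow> cf z > 0"
    "\<And>z \<Omega> \<Psi>. z \<in> I \<Longrightarrow> (\<forall>i<M1. \<Omega> i \<in> probvec) \<Longrightarrow> (\<forall>j<M2. \<Psi> j \<in> probvec) \<Longrightarrow>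
      Gm {z} \<alpha> \<beta> \<Omega> \<Psi> \<le> l1 \<Longrightarrow> ereal (cf z) \<le> Eexp M1 M2 \<alpha> \<beta> P Q \<Omega> \<Psi>"
    by (metis (no_types, lifting) bchoice)
  define c where "c = Min (cf ` I)"
  have "(0,0) \<in> I" using M1 M2 unfolding I_def by auto
  then have fI: "finite I" "I \<noteq> {}" unfolding I_def by auto
  have c0: "c > 0" unfolding c_def using fI cf(1) by (subst Min_gr_iff) auto
  have cle: "c \<le> cf z" if "z \<in> I" for z unfolding c_def using fI that by (intro Min_le) auto
  define \<Phi> where "\<Phi> X Y \<longleftrightarrow> (\<exists>z\<in>I. Gm {z} \<alpha> \<beta> X Y \<le> l1)" for X Y :: "nat \<Rightarrow> 'a \<Rightarrow> real"
  have L: "loc M1 M2 \<Phi>" unfolding loc_def \<Phi>_def I_def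
  proof (intro allI impI)
    fix X X' Y Y' :: "nat \<Rightarrow> 'a \<Rightarrow> real" assume "\<forall>i<M1. X i = X' i" "\<forall>j<M2. Y j = Y' j"
    then have "Gm {z} \<alpha> \<beta> X Y = Gm {z} \<alpha> \<beta> X' Y'" if "z \<in> {..<M1} \<times> {..<M2}" for z
      using that by (intro Gm_loc) auto
    then show "(\<exists>z\<in>{..<M1} \<times> {..<M2}. Gm {z} \<alpha> \<beta> X Y \<le> l1) = (\<exists>z\<in>{..<M1} \<times> {..<M2}. Gm {z} \<alpha> \<beta> X' Y' \<le> l1)"
      by auto
  qed
  show ?thesis
  proof (rule Etau_bound[OF L a b c0])
    fix \<Omega> \<Psi> :: "nat \<Rightarrow> 'a \<Rightarrow> real"
    assume O: "\<forall>i<M1. \<Omega> i \<in> probvec" and Ps: "\<forall>j<M2. \<Psi> j \<in> probvec" and "\<Phi> \<Omega> \<Psi>"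
    then obtain z where z: "z \<in> I" "Gm {z} \<alpha> \<beta> \<Omega> \<Psi> \<le> l1" unfolding \<Phi>_def by blast
    have "ereal c \<le> ereal (cf z)" using cle[OF z(1)] by simp
    also have "\<dots> \<le> Eexp M1 M2 \<alpha> \<beta> P Q \<Omega> \<Psi>" by (rule cf(2)[OF z(1) O Ps z(2)])
    finally show "ereal c \<le> Eexp M1 M2 \<alpha> \<beta> P Q \<Omega> \<Psi>" .
  next
    fix n :: nat and \<omega> :: "'a sample" assume n: "n \<ge> 1" and ns: "\<not> stops M1 M2 \<alpha> \<beta> l1 l2 l3 n \<omega>"
    then have "\<not> evA M1 M2 \<alpha> \<beta> l1 n \<omega>" unfolding stops_def by blast
    then obtain m where m: "m \<in> Midx M1 M2" "Sstat \<alpha> \<beta> m n \<omega> \<le> l1" unfolding evA_def by (auto simp: not_less)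
    have "m \<noteq> {}" using Midx_card[OF m(1)] by auto
    then obtain z where zm: "z \<in> m" by blast
    have mm: "is_match M1 M2 m" by (rule Midx_match[OF m(1)])
    have zI: "z \<in> I" using is_match_sub[OF mm] zm unfolding I_def by auto
    have "Gm {z} \<alpha> \<beta> (tX (ssize \<alpha> n) \<omega>) (tY (ssize \<beta> n) \<omega>) \<le> Gm m \<alpha> \<beta> (tX (ssize \<alpha> n) \<omega>) (tY (ssize \<beta> n) \<omega>)"
      using zm is_match_finite[OF mm] is_match_sub[OF mm] tX_probvec[OF a n] tY_probvec[OF b n] a b
      by (intro Gm_mono) auto
    also have "\<dots> \<le> l1" using m(2) unfolding Sstat_eq .
    finally show "\<Phi> (tX (ssize \<alpha> n) \<omega>) (tY (ssize \<beta> n) \<omega>)" unfolding \<Phi>_def using zI by blast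
  qed
qed

lemma part1_rate:
  fixes P Q :: "nat \<Rightarrow> 'a::finite pmf"
  assumes a: "\<alpha> > 0" and b: "\<beta> > 0" and l12: "l2 \<le> l1"
  shows "Er M1 M2 \<alpha> \<beta> l1 P Q \<le>
         liminf (\<lambda>N. neglog (measure (obs_space P Q)
            {\<omega> \<in> space (obs_space P Q). tau M1 M2 \<alpha> \<beta> l1 l2 l3 N \<omega> \<noteq> \<infinity> \<and>
                 decision M1 M2 \<alpha> \<beta> l1 l2 l3 N \<omega> \<noteq> None}) / ereal (real N))"
proof -
  define \<Phi> where "\<Phi> X Y \<longleftrightarrow> (\<exists>m\<in>Midx M1 M2. Gm m \<alpha> \<beta> X Y \<le> l1)" for X Y :: "nat \<Rightarrow> 'a \<Rightarrow> real"
  have L: "loc M1 M2 \<Phi>" unfolding loc_def \<Phi>_def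
  proof (intro allI impI)
    fix X X' Y Y' :: "nat \<Rightarrow> 'a \<Rightarrow> real" assume "\<forall>i<M1. X i = X' i" "\<forall>j<M2. Y j = Y' j"
    then have "Gm m \<alpha> \<beta> X Y = Gm m \<alpha> \<beta> X' Y'" if "m \<in> Midx M1 M2" for m
      using that is_match_sub[OF Midx_match] by (intro Gm_loc) auto
    then show "(\<exists>m\<in>Midx M1 M2. Gm m \<alpha> \<beta> X Y \<le> l1) = (\<exists>m\<in>Midx M1 M2. Gm m \<alpha> \<beta> X' Y' \<le> l1)" by auto
  qed
  show ?thesis
  proof (rule rate_bound[OF L a b])
    fix \<Omega> \<Psi> :: "nat \<Rightarrow> 'a \<Rightarrow> real"
    assume O: "\<forall>i<M1. \<Omega> i \<in> probvec" and Ps: "\<forall>j<M2. \<Psi> j \<in> probvec" and "\<Phi> \<Omega> \<Psi>"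
    then obtain m where m: "m \<in> Midx M1 M2" "Gm m \<alpha> \<beta> \<Omega> \<Psi> \<le> l1" unfolding \<Phi>_def by blast
    show "Er M1 M2 \<alpha> \<beta> l1 P Q \<le> Eexp M1 M2 \<alpha> \<beta> P Q \<Omega> \<Psi>"
      by (rule Er_le[OF m(1)]) (use O Ps m(2) in \<open>simp add: feasible_def\<close>)
  next
    show "eventually (\<lambda>N. {\<omega> \<in> space (obs_space P Q). tau M1 M2 \<alpha> \<beta> l1 l2 l3 N \<omega> \<noteq> \<infinity> \<and>
                 decision M1 M2 \<alpha> \<beta> l1 l2 l3 N \<omega> \<noteq> None} \<subseteq>
        (\<Union>n. if N - 1 \<le> n then {\<omega>. \<Phi> (tX (ssize \<alpha> n) \<omega>) (tY (ssize \<beta> n) \<omega>)} else {})) sequentially"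
    proof (rule always_eventually, intro allI subsetI)
      fix N \<omega> assume "\<omega> \<in> {\<omega> \<in> space (obs_space P Q). tau M1 M2 \<alpha> \<beta> l1 l2 l3 N \<omega> \<noteq> \<infinity> \<and>
                 decision M1 M2 \<alpha> \<beta> l1 l2 l3 N \<omega> \<noteq> None}"
      then obtain m' where "decision M1 M2 \<alpha> \<beta> l1 l2 l3 N \<omega> = Some m'" by auto
      from decision_SomeD[OF this] obtain n where n: "tau M1 M2 \<alpha> \<beta> l1 l2 l3 N \<omega> = enat n"
        "m' \<in> Midx M1 M2" "evD M1 M2 \<alpha> \<beta> l2 l3 m' n \<omega>" by blast
      have "Sstat \<alpha> \<beta> m' n \<omega> \<le> l2" using n(3) unfolding evD_def evB_def by blast
      then have "Gm m' \<alpha> \<beta> (tX (ssize \<alpha> n) \<omega>) (tY (ssize \<beta> n) \<omega>) \<le> l1"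
        using l12 unfolding Sstat_eq by linarith
      then have "\<Phi> (tX (ssize \<alpha> n) \<omega>) (tY (ssize \<beta> n) \<omega>)"
        unfolding \<Phi>_def using n(2) by blast
      moreover have "N - 1 \<le> n" by (rule tau_enatD(1)[OF n(1)])
      ultimately show "\<omega> \<in> (\<Union>n. if N - 1 \<le> n then {\<omega>. \<Phi> (tX (ssize \<alpha> n) \<omega>) (tY (ssize \<beta> n) \<omega>)} else {})"
        by auto
    qed
  qed
qed


lemma pmf_probvecs: "\<forall>i<M. pmf (P i) \<in> probvec"
  using pmf_probvec by blast

lemma C7:
  fixes P Q :: "nat \<Rightarrow> 'a::finite pmf"
  assumes a: "\<alpha> > 0" and b: "\<beta> > 0" and tr: "\<forall>(i,j)\<in>m. P i = Q j"
    and lam: "ereal l3 < Lam M1 M2 \<alpha> \<beta> m P Q"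
    and m': "m' \<in> matches M1 M2 (card m)" "m' \<noteq> m"
  shows "l3 < Gm m' \<alpha> \<beta> (\<lambda>i. pmf (P i)) (\<lambda>j. pmf (Q j))"
proof -
  have f: "finite m'" using m' by (auto simp: matches_iff intro: is_match_finite)
  have "ereal l3 < ereal (\<Sum>(i,j)\<in>m' - m. GJS (pmf (P i)) (pmf (Q j)) \<alpha> \<beta>)"
    using lam Lam_le[OF m'] by (rule less_le_trans)
  then show ?thesis unfolding Gm_true_split[OF tr f a b] by simp
qed

lemma C8:
  fixes P Q :: "nat \<Rightarrow> 'a::finite pmf"
  assumes a: "\<alpha> > 0" and b: "\<beta> > 0" and tr: "\<forall>(i,j)\<in>m. P i = Q j" and mM: "m \<in> Midx M1 M2"
    and lam: "ereal l3 < Lam M1 M2 \<alpha> \<beta> m P Q"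
    and m'': "m'' \<in> Midx M1 M2" "card m < card m''"
  shows "l3 < Gm m'' \<alpha> \<beta> (\<lambda>i. pmf (P i)) (\<lambda>j. pmf (Q j))"
proof -
  have mm: "is_match M1 M2 m''" by (rule Midx_match[OF m''(1)])
  obtain A where A: "A \<subseteq> m''" "card A = card m" "A \<noteq> m"
    using subset_card_ne[OF is_match_finite[OF mm] Midx_card[OF mM] m''(2)] by blast
  have Am: "A \<in> matches M1 M2 (card m)" using A is_match_subset[OF mm A(1)] by (simp add: matches_iff)
  have "l3 < Gm A \<alpha> \<beta> (\<lambda>i. pmf (P i)) (\<lambda>j. pmf (Q j))" by (rule C7[OF a b tr lam Am A(3)])
  also have "\<dots> \<le> Gm m'' \<alpha> \<beta> (\<lambda>i. pmf (P i)) (\<lambda>j. pmf (Q j))"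
    by (rule Gm_mono[OF A(1) is_match_finite[OF mm] is_match_sub[OF mm] pmf_probvecs pmf_probvecs a b])
  finally show ?thesis .
qed

lemma smaller_card_case:
  fixes \<omega> :: "'a::finite sample"
  assumes a: "\<alpha> > 0" and b: "\<beta> > 0" and n: "n \<ge> 1" and mM: "m \<in> Midx M1 M2"
    and m': "m' \<in> Midx M1 M2" "card m' < card m"
    and B: "\<forall>m''\<in>matches M1 M2 (card m'). m'' \<noteq> m' \<longrightarrow> l3 < Sstat \<alpha> \<beta> m'' n \<omega>"
  shows "l3 < Sstat \<alpha> \<beta> m n \<omega>"
proof -
  have mm: "is_match M1 M2 m" by (rule Midx_match[OF mM])
  obtain A where A: "A \<subseteq> m" "card A = card m'" "A \<noteq> m'"
    using subset_card_ne[OF is_match_finite[OF mm] Midx_card[OF m'(1)] m'(2)] by blast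
  have Am: "A \<in> matches M1 M2 (card m')" using A is_match_subset[OF mm A(1)] by (simp add: matches_iff)
  have "l3 < Sstat \<alpha> \<beta> A n \<omega>" using B Am A(3) by blast
  also have "\<dots> \<le> Sstat \<alpha> \<beta> m n \<omega>" unfolding Sstat_eq
    using tX_probvec[OF a n] tY_probvec[OF b n]
    by (intro Gm_mono[OF A(1) is_match_finite[OF mm] is_match_sub[OF mm] _ _ a b]) auto
  finally show ?thesis .
qed

lemma part2_tau:
  fixes P Q :: "nat \<Rightarrow> 'a::finite pmf"
  assumes a: "\<alpha> > 0" and b: "\<beta> > 0" and l2: "l2 > 0" and l23: "l2 \<le> l3"
    and mM: "m \<in> Midx M1 M2" and inP: "inPm M1 M2 m P Q"
    and lam: "ereal l3 < Lam M1 M2 \<alpha> \<beta> m P Q"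
  shows "eventually (\<lambda>N. (\<integral>\<^sup>+ \<omega>. ennreal_of_enat (tau M1 M2 \<alpha> \<beta> l1 l2 l3 N \<omega>) \<partial>obs_space P Q) \<le> ennreal (real N)) sequentially"
proof -
  define K where "K = card m"
  have mm: "is_match M1 M2 m" by (rule Midx_match[OF mM])
  have tr: "\<forall>(i,j)\<in>m. P i = Q j" by (rule inPm_true[OF inP mm])
  define F where "F = {m' \<in> matches M1 M2 K. m' \<noteq> m} \<union> {m'' \<in> Midx M1 M2. K < card m''}"
  define v where "v m' = (if card m' = K then l3 else l2)" for m' :: "(nat \<times> nat) set"
  have Fsub: "m' \<subseteq> {..<M1} \<times> {..<M2}" if "m' \<in> F" for m'
    using that unfolding F_def by (auto simp: matches_iff dest: Midx_match is_match_sub)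
  have Fv: "v m' < Gm m' \<alpha> \<beta> (\<lambda>i. pmf (P i)) (\<lambda>j. pmf (Q j))" if "m' \<in> F" for m'
  proof (cases "m' \<in> matches M1 M2 K \<and> m' \<noteq> m")
    case True
    then have "card m' = K" by (simp add: matches_iff)
    then show ?thesis using C7[OF a b tr lam] True unfolding v_def K_def by auto
  next
    case False
    then have m'': "m' \<in> Midx M1 M2" "K < card m'" using that unfolding F_def by auto
    then have "l3 < Gm m' \<alpha> \<beta> (\<lambda>i. pmf (P i)) (\<lambda>j. pmf (Q j))" using C8[OF a b tr mM lam] unfolding K_def by auto
    then show ?thesis using m''(2) l23 unfolding v_def by auto
  qed
  have "\<forall>m'\<in>F. \<exists>c>0. \<forall>\<Omega> \<Psi>. (\<forall>i<M1. \<Omega> i \<in> probvec) \<longrightarrow> (\<forall>j<M2. \<Psi> j \<in> probvec) \<longrightarrow>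
      Gm m' \<alpha> \<beta> \<Omega> \<Psi> \<le> v m' \<longrightarrow> ereal c \<le> Eexp M1 M2 \<alpha> \<beta> P Q \<Omega> \<Psi>"
    using Fsub Fv by (blast intro: cont_gap[OF a b])
  then obtain cf where cf: "\<And>m'. m' \<in> F \<Longrightarrow> cf m' > 0"
    "\<And>m' \<Omega> \<Psi>. m' \<in> F \<Longrightarrow> (\<forall>i<M1. \<Omega> i \<in> probvec) \<Longrightarrow> (\<forall>j<M2. \<Psi> j \<in> probvec) \<Longrightarrow>
      Gm m' \<alpha> \<beta> \<Omega> \<Psi> \<le> v m' \<Longrightarrow> ereal (cf m') \<le> Eexp M1 M2 \<alpha> \<beta> P Q \<Omega> \<Psi>"
    by (metis (no_types, lifting) bchoice)
  have fF: "finite F" unfolding F_def using finite_matches finite_Midx by auto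
  define c where "c = Min (insert l2 (cf ` F))"
  have c0: "c > 0" unfolding c_def using fF cf(1) l2 by (subst Min_gr_iff) auto
  have cl2: "c \<le> l2" unfolding c_def using fF by (intro Min_le) auto
  have cle: "c \<le> cf m'" if "m' \<in> F" for m' unfolding c_def using fF that by (intro Min_le) auto
  define \<Phi> where "\<Phi> X Y \<longleftrightarrow> l2 < Gm m \<alpha> \<beta> X Y \<or> (\<exists>m'\<in>F. Gm m' \<alpha> \<beta> X Y \<le> v m')" for X Y :: "nat \<Rightarrow> 'a \<Rightarrow> real"
  have L: "loc M1 M2 \<Phi>" unfolding loc_def \<Phi>_def
  proof (intro allI impI)
    fix X X' Y Y' :: "nat \<Rightarrow> 'a \<Rightarrow> real" assume XY: "\<forall>i<M1. X i = X' i" "\<forall>j<M2. Y j = Y' j"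
    then have "Gm m' \<alpha> \<beta> X Y = Gm m' \<alpha> \<beta> X' Y'" if "m' \<in> F" for m'
      using Fsub[OF that] by (intro Gm_loc) auto
    moreover have "Gm m \<alpha> \<beta> X Y = Gm m \<alpha> \<beta> X' Y'" using XY is_match_sub[OF mm] by (intro Gm_loc) auto
    ultimately show "(l2 < Gm m \<alpha> \<beta> X Y \<or> (\<exists>m'\<in>F. Gm m' \<alpha> \<beta> X Y \<le> v m')) =
        (l2 < Gm m \<alpha> \<beta> X' Y' \<or> (\<exists>m'\<in>F. Gm m' \<alpha> \<beta> X' Y' \<le> v m'))" by auto
  qed
  show ?thesis
  proof (rule Etau_bound[OF L a b c0])
    fix \<Omega> \<Psi> :: "nat \<Rightarrow> 'a \<Rightarrow> real"
    assume O: "\<forall>i<M1. \<Omega> i \<in> probvec" and Ps: "\<forall>j<M2. \<Psi> j \<in> probvec" and Ph: "\<Phi> \<Omega> \<Psi>"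
    show "ereal c \<le> Eexp M1 M2 \<alpha> \<beta> P Q \<Omega> \<Psi>"
    proof (cases "l2 < Gm m \<alpha> \<beta> \<Omega> \<Psi>")
      case True
      have "ereal c \<le> ereal (Gm m \<alpha> \<beta> \<Omega> \<Psi>)" using cl2 True by simp
      also have "\<dots> \<le> Eexp M1 M2 \<alpha> \<beta> P Q \<Omega> \<Psi>" by (rule Eexp_ge_Gm[OF mm tr O Ps a b])
      finally show ?thesis .
    next
      case False
      then obtain m' where m': "m' \<in> F" "Gm m' \<alpha> \<beta> \<Omega> \<Psi> \<le> v m'" using Ph unfolding \<Phi>_def by blast
      have "ereal c \<le> ereal (cf m')" using cle[OF m'(1)] by simp
      also have "\<dots> \<le> Eexp M1 M2 \<alpha> \<beta> P Q \<Omega> \<Psi>" by (rule cf(2)[OF m'(1) O Ps m'(2)])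
      finally show ?thesis .
    qed
  next
    fix n :: nat and \<omega> :: "'a sample" assume n: "n \<ge> 1" and ns: "\<not> stops M1 M2 \<alpha> \<beta> l1 l2 l3 n \<omega>"
    let ?S = "\<lambda>m'. Sstat \<alpha> \<beta> m' n \<omega>"
    have nD: "\<not> evD M1 M2 \<alpha> \<beta> l2 l3 m n \<omega>" using ns mM unfolding stops_def by blast
    have "l2 < ?S m \<or> (\<exists>m'\<in>F. ?S m' \<le> v m')"
    proof (cases "evB M1 M2 \<alpha> \<beta> l2 l3 m n \<omega>")
      case False
      then have "\<not> ?S m \<le> l2 \<or> (\<exists>m'\<in>matches M1 M2 K. m' \<noteq> m \<and> ?S m' \<le> l3)"
        unfolding evB_def K_def by (auto simp: not_less)
      then show ?thesis
      proof
        assume "\<not> ?S m \<le> l2" then show ?thesis by simp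
      next
        assume "\<exists>m'\<in>matches M1 M2 K. m' \<noteq> m \<and> ?S m' \<le> l3"
        then obtain m' where "m' \<in> matches M1 M2 K" "m' \<noteq> m" "?S m' \<le> l3" by blast
        moreover then have "m' \<in> F" "v m' = l3" unfolding F_def v_def by (auto simp: matches_iff)
        ultimately show ?thesis by auto
      qed
    next
      case True
      then obtain m'' where m'': "m'' \<in> Midx M1 M2" "m'' \<noteq> m" "evB M1 M2 \<alpha> \<beta> l2 l3 m'' n \<omega>"
        using nD unfolding evD_def by blast
      have S'': "?S m'' \<le> l2" and B'': "\<forall>m'''\<in>matches M1 M2 (card m''). m''' \<noteq> m'' \<longrightarrow> l3 < ?S m'''"
        using m''(3) unfolding evB_def by auto
      consider "K < card m''" | "card m'' = K" | "card m'' < K" by linarith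
      then show ?thesis
      proof cases
        case 1
        then have "m'' \<in> F" "v m'' = l2" using m''(1) unfolding F_def v_def by auto
        then show ?thesis using S'' by auto
      next
        case 2
        then have "m \<in> matches M1 M2 (card m'')" using mm unfolding K_def by (simp add: matches_iff)
        then have "l3 < ?S m" using B'' m''(2) by auto
        then show ?thesis using l23 by auto
      next
        case 3
        have "l3 < ?S m" by (rule smaller_card_case[OF a b n mM m''(1) 3[unfolded K_def] B''])
        then show ?thesis using l23 by auto
      qed
    qed
    then show "\<Phi> (tX (ssize \<alpha> n) \<omega>) (tY (ssize \<beta> n) \<omega>)" unfolding \<Phi>_def Sstat_eq .
  qed
qed


lemma part2_mis:
  fixes P Q :: "nat \<Rightarrow> 'a::finite pmf"
  assumes a: "\<alpha> > 0" and b: "\<beta> > 0" and l23: "l2 \<le> l3"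
    and mM: "m \<in> Midx M1 M2" and inP: "inPm M1 M2 m P Q"
  shows "min (Gexp M1 M2 \<alpha> \<beta> (card m) l2 P Q) (ereal l3) \<le>
         liminf (\<lambda>N. neglog (measure (obs_space P Q)
            {\<omega> \<in> space (obs_space P Q). tau M1 M2 \<alpha> \<beta> l1 l2 l3 N \<omega> \<noteq> \<infinity> \<and>
                 decision M1 M2 \<alpha> \<beta> l1 l2 l3 N \<omega> \<notin> {Some m, None}}) / ereal (real N))"
proof -
  define K where "K = card m"
  have mm: "is_match M1 M2 m" by (rule Midx_match[OF mM])
  have tr: "\<forall>(i,j)\<in>m. P i = Q j" by (rule inPm_true[OF inP mm])
  define \<Phi> where "\<Phi> X Y \<longleftrightarrow> (\<exists>m'\<in>Midx M1 M2. K < card m' \<and> Gm m' \<alpha> \<beta> X Y \<le> l2) \<or> l3 < Gm m \<alpha> \<beta> X Y"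
    for X Y :: "nat \<Rightarrow> 'a \<Rightarrow> real"
  have L: "loc M1 M2 \<Phi>" unfolding loc_def \<Phi>_def
  proof (intro allI impI)
    fix X X' Y Y' :: "nat \<Rightarrow> 'a \<Rightarrow> real" assume XY: "\<forall>i<M1. X i = X' i" "\<forall>j<M2. Y j = Y' j"
    then have "Gm m' \<alpha> \<beta> X Y = Gm m' \<alpha> \<beta> X' Y'" if "m' \<in> Midx M1 M2" for m'
      using that is_match_sub[OF Midx_match] by (intro Gm_loc) auto
    moreover have "Gm m \<alpha> \<beta> X Y = Gm m \<alpha> \<beta> X' Y'" using XY is_match_sub[OF mm] by (intro Gm_loc) auto
    ultimately show "((\<exists>m'\<in>Midx M1 M2. K < card m' \<and> Gm m' \<alpha> \<beta> X Y \<le> l2) \<or> l3 < Gm m \<alpha> \<beta> X Y) =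
        ((\<exists>m'\<in>Midx M1 M2. K < card m' \<and> Gm m' \<alpha> \<beta> X' Y' \<le> l2) \<or> l3 < Gm m \<alpha> \<beta> X' Y')" by auto
  qed
  show ?thesis unfolding K_def[symmetric]
  proof (rule rate_bound[OF L a b])
    fix \<Omega> \<Psi> :: "nat \<Rightarrow> 'a \<Rightarrow> real"
    assume O: "\<forall>i<M1. \<Omega> i \<in> probvec" and Ps: "\<forall>j<M2. \<Psi> j \<in> probvec" and Ph: "\<Phi> \<Omega> \<Psi>"
    show "min (Gexp M1 M2 \<alpha> \<beta> K l2 P Q) (ereal l3) \<le> Eexp M1 M2 \<alpha> \<beta> P Q \<Omega> \<Psi>"
    proof (cases "l3 < Gm m \<alpha> \<beta> \<Omega> \<Psi>")
      case True
      have "min (Gexp M1 M2 \<alpha> \<beta> K l2 P Q) (ereal l3) \<le> ereal (Gm m \<alpha> \<beta> \<Omega> \<Psi>)" using True by (simp add: min.coboundedI2)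
      also have "\<dots> \<le> Eexp M1 M2 \<alpha> \<beta> P Q \<Omega> \<Psi>" by (rule Eexp_ge_Gm[OF mm tr O Ps a b])
      finally show ?thesis .
    next
      case False
      then obtain m' where m': "m' \<in> Midx M1 M2" "K < card m'" "Gm m' \<alpha> \<beta> \<Omega> \<Psi> \<le> l2" using Ph unfolding \<Phi>_def by blast
      have "Gexp M1 M2 \<alpha> \<beta> K l2 P Q \<le> Eexp M1 M2 \<alpha> \<beta> P Q \<Omega> \<Psi>"
        by (rule Gexp_le[OF m'(1,2)]) (use O Ps m'(3) in \<open>simp add: feasible_def\<close>)
      then show ?thesis by (simp add: min.coboundedI1)
    qed
  next
    show "eventually (\<lambda>N. {\<omega> \<in> space (obs_space P Q). tau M1 M2 \<alpha> \<beta> l1 l2 l3 N \<omega> \<noteq> \<infinity> \<and>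
                 decision M1 M2 \<alpha> \<beta> l1 l2 l3 N \<omega> \<notin> {Some m, None}} \<subseteq>
        (\<Union>n. if N - 1 \<le> n then {\<omega>. \<Phi> (tX (ssize \<alpha> n) \<omega>) (tY (ssize \<beta> n) \<omega>)} else {})) sequentially"
      using eventually_ge_at_top[of 2]
    proof (eventually_elim, intro subsetI)
      case (elim N)
      fix \<omega> assume "\<omega> \<in> {\<omega> \<in> space (obs_space P Q). tau M1 M2 \<alpha> \<beta> l1 l2 l3 N \<omega> \<noteq> \<infinity> \<and>
                 decision M1 M2 \<alpha> \<beta> l1 l2 l3 N \<omega> \<notin> {Some m, None}}"
      then obtain m' where dm: "decision M1 M2 \<alpha> \<beta> l1 l2 l3 N \<omega> = Some m'" and mm': "m' \<noteq> m" by auto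
      from decision_SomeD[OF dm] obtain n where n: "tau M1 M2 \<alpha> \<beta> l1 l2 l3 N \<omega> = enat n"
        "m' \<in> Midx M1 M2" "evD M1 M2 \<alpha> \<beta> l2 l3 m' n \<omega>" by blast
      have Nn: "N - 1 \<le> n" by (rule tau_enatD(1)[OF n(1)])
      then have n1: "n \<ge> 1" using elim by simp
      let ?S = "\<lambda>m'. Sstat \<alpha> \<beta> m' n \<omega>"
      have S': "?S m' \<le> l2" and B': "\<forall>m'''\<in>matches M1 M2 (card m'). m''' \<noteq> m' \<longrightarrow> l3 < ?S m'''"
        using n(3) unfolding evD_def evB_def by auto
      have "(\<exists>m'\<in>Midx M1 M2. K < card m' \<and> ?S m' \<le> l2) \<or> l3 < ?S m"
      proof -
        consider "K < card m'" | "card m' = K" | "card m' < K" by linarith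
        then show ?thesis
        proof cases
          case 1 then show ?thesis using n(2) S' by auto
        next
          case 2
          then have "m \<in> matches M1 M2 (card m')" using mm unfolding K_def by (simp add: matches_iff)
          then show ?thesis using B' mm' by auto
        next
          case 3
          show ?thesis using smaller_card_case[OF a b n1 mM n(2) 3[unfolded K_def] B'] by simp
        qed
      qed
      then have "\<Phi> (tX (ssize \<alpha> n) \<omega>) (tY (ssize \<beta> n) \<omega>)" unfolding \<Phi>_def Sstat_eq .
      then show "\<omega> \<in> (\<Union>n. if N - 1 \<le> n then {\<omega>. \<Phi> (tX (ssize \<alpha> n) \<omega>) (tY (ssize \<beta> n) \<omega>)} else {})"
        using Nn by auto
    qed
  qed
qed

lemma part2_rej:
  fixes P Q :: "nat \<Rightarrow> 'a::finite pmf"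
  assumes a: "\<alpha> > 0" and b: "\<beta> > 0"
    and mM: "m \<in> Midx M1 M2" and inP: "inPm M1 M2 m P Q"
  shows "ereal l1 \<le>
         liminf (\<lambda>N. neglog (measure (obs_space P Q)
            {\<omega> \<in> space (obs_space P Q). tau M1 M2 \<alpha> \<beta> l1 l2 l3 N \<omega> \<noteq> \<infinity> \<and>
                 decision M1 M2 \<alpha> \<beta> l1 l2 l3 N \<omega> = None}) / ereal (real N))"
proof -
  have mm: "is_match M1 M2 m" by (rule Midx_match[OF mM])
  have tr: "\<forall>(i,j)\<in>m. P i = Q j" by (rule inPm_true[OF inP mm])
  define \<Phi> where "\<Phi> X Y \<longleftrightarrow> l1 < Gm m \<alpha> \<beta> X Y" for X Y :: "nat \<Rightarrow> 'a \<Rightarrow> real"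
  have L: "loc M1 M2 \<Phi>" unfolding loc_def \<Phi>_def
  proof (intro allI impI)
    fix X X' Y Y' :: "nat \<Rightarrow> 'a \<Rightarrow> real" assume XY: "\<forall>i<M1. X i = X' i" "\<forall>j<M2. Y j = Y' j"
    have "Gm m \<alpha> \<beta> X Y = Gm m \<alpha> \<beta> X' Y'" using XY is_match_sub[OF mm] by (intro Gm_loc) auto
    then show "(l1 < Gm m \<alpha> \<beta> X Y) = (l1 < Gm m \<alpha> \<beta> X' Y')" by simp
  qed
  show ?thesis
  proof (rule rate_bound[OF L a b])
    fix \<Omega> \<Psi> :: "nat \<Rightarrow> 'a \<Rightarrow> real"
    assume O: "\<forall>i<M1. \<Omega> i \<in> probvec" and Ps: "\<forall>j<M2. \<Psi> j \<in> probvec" and Ph: "\<Phi> \<Omega> \<Psi>"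
    have "ereal l1 \<le> ereal (Gm m \<alpha> \<beta> \<Omega> \<Psi>)" using Ph unfolding \<Phi>_def by simp
    also have "\<dots> \<le> Eexp M1 M2 \<alpha> \<beta> P Q \<Omega> \<Psi>" by (rule Eexp_ge_Gm[OF mm tr O Ps a b])
    finally show "ereal l1 \<le> Eexp M1 M2 \<alpha> \<beta> P Q \<Omega> \<Psi>" .
  next
    show "eventually (\<lambda>N. {\<omega> \<in> space (obs_space P Q). tau M1 M2 \<alpha> \<beta> l1 l2 l3 N \<omega> \<noteq> \<infinity> \<and>
                 decision M1 M2 \<alpha> \<beta> l1 l2 l3 N \<omega> = None} \<subseteq>
        (\<Union>n. if N - 1 \<le> n then {\<omega>. \<Phi> (tX (ssize \<alpha> n) \<omega>) (tY (ssize \<beta> n) \<omega>)} else {})) sequentially"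
    proof (rule always_eventually, intro allI subsetI)
      fix N \<omega> assume w: "\<omega> \<in> {\<omega> \<in> space (obs_space P Q). tau M1 M2 \<alpha> \<beta> l1 l2 l3 N \<omega> \<noteq> \<infinity> \<and>
                 decision M1 M2 \<alpha> \<beta> l1 l2 l3 N \<omega> = None}"
      then obtain n where n: "tau M1 M2 \<alpha> \<beta> l1 l2 l3 N \<omega> = enat n" by (cases "tau M1 M2 \<alpha> \<beta> l1 l2 l3 N \<omega>") auto
      have "evA M1 M2 \<alpha> \<beta> l1 n \<omega>" by (rule decision_NoneD[OF n]) (use w in auto)
      then have "l1 < Sstat \<alpha> \<beta> m n \<omega>" using mM unfolding evA_def by blast
      then have "\<Phi> (tX (ssize \<alpha> n) \<omega>) (tY (ssize \<beta> n) \<omega>)" unfolding \<Phi>_def Sstat_eq .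
      moreover have "N - 1 \<le> n" by (rule tau_enatD(1)[OF n])
      ultimately show "\<omega> \<in> (\<Union>n. if N - 1 \<le> n then {\<omega>. \<Phi> (tX (ssize \<alpha> n) \<omega>) (tY (ssize \<beta> n) \<omega>)} else {})"
        by auto
    qed
  qed
qed



theorem theorem3:
  fixes M1 M2 :: nat and \<alpha> \<beta> l1 l2 l3 :: real
  assumes "M1 \<ge> M2" and "M2 \<ge> 1" and "\<alpha> > 0" and "\<beta> > 0"
    and "l1 > 0" and "l2 > 0" and "l3 > 0" and "l2 \<le> min l1 l3"
  shows
  "(\<forall>(P :: nat \<Rightarrow> 'a::finite pmf) Q. inP0 M1 M2 P Q \<longrightarrow> l1 < G0 M1 M2 \<alpha> \<beta> P Q \<longrightarrow>
      (eventually (\<lambda>N. (\<integral>\<^sup>+ \<omega>. ennreal_of_enat (tau M1 M2 \<alpha> \<beta> l1 l2 l3 N \<omega>) \<partial>obs_space P Q)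
                         \<le> ennreal (real N)) sequentially \<and>
       Er M1 M2 \<alpha> \<beta> l1 P Q \<le>
         liminf (\<lambda>N. neglog (measure (obs_space P Q)
            {\<omega> \<in> space (obs_space P Q). tau M1 M2 \<alpha> \<beta> l1 l2 l3 N \<omega> \<noteq> \<infinity> \<and>
                 decision M1 M2 \<alpha> \<beta> l1 l2 l3 N \<omega> \<noteq> None}) / ereal (real N))))
   \<and>
   (\<forall>m \<in> Midx M1 M2. \<forall>(P :: nat \<Rightarrow> 'a::finite pmf) Q. inPm M1 M2 m P Q \<longrightarrow>
      ereal l3 < Lam M1 M2 \<alpha> \<beta> m P Q \<longrightarrow>
      (eventually (\<lambda>N. (\<integral>\<^sup>+ \<omega>. ennreal_of_enat (tau M1 M2 \<alpha> \<beta> l1 l2 l3 N \<omega>) \<partial>obs_space P Q)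
                         \<le> ennreal (real N)) sequentially \<and>
       min (Gexp M1 M2 \<alpha> \<beta> (card m) l2 P Q) (ereal l3) \<le>
         liminf (\<lambda>N. neglog (measure (obs_space P Q)
            {\<omega> \<in> space (obs_space P Q). tau M1 M2 \<alpha> \<beta> l1 l2 l3 N \<omega> \<noteq> \<infinity> \<and>
                 decision M1 M2 \<alpha> \<beta> l1 l2 l3 N \<omega> \<notin> {Some m, None}}) / ereal (real N)) \<and>
       ereal l1 \<le>
         liminf (\<lambda>N. neglog (measure (obs_space P Q)
            {\<omega> \<in> space (obs_space P Q). tau M1 M2 \<alpha> \<beta> l1 l2 l3 N \<omega> \<noteq> \<infinity> \<and>
                 decision M1 M2 \<alpha> \<beta> l1 l2 l3 N \<omega> = None}) / ereal (real N))))"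
proof -
  have a: "\<alpha> > 0" and b: "\<beta> > 0" using assms(3,4) by auto
  have M2: "M2 \<ge> 1" using assms(2) by simp
  have M1: "M1 \<ge> 1" using assms(1,2) by simp
  have l12: "l2 \<le> l1" and l23: "l2 \<le> l3" using assms(8) by auto
  have l2: "l2 > 0" using assms(6) by simp
  show ?thesis
    apply (intro conjI allI impI ballI)
    subgoal for P Q using part1_tau[OF a b M1 M2] by blast
    subgoal for P Q using part1_rate[OF a b l12] by blast
    subgoal for m P Q using part2_tau[OF a b l2 l23] by blast
    subgoal for m P Q using part2_mis[OF a b l23] by blast
    subgoal for m P Q using part2_rej[OF a b] by blast
    done
qed

end
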